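(* Let $W$ be a weak $V$-module and $z$ a nonzero complex number. For all $u,v\in V$, $Y^L_{P(z)}(u,x_1)Y^R_{P(z)}(v,x_2)=Y^R_{P(z)}(v,x_2)Y^L_{P(z)}(u,x_1)$ as operators on $\mathcal D_{P(z)}(W)$.
   Context: $V$ is a vertex operator algebra with vacuum $\mathbf 1$, Virasoro element $\omega$, $Y(\omega,x)=\sum_{n}L(n)x^{-n-2}$, and $V=\coprod_{n\in\mathbb Z}V_{(n)}$ graded by $L(0)$-eigenvalues. The formal delta function is $\delta(x)=\sum_{n\in\mathbb Z}x^n$; binomial expressions $(x_1-x_2)^n$ are expanded in nonnegative powers of the second variable. A weak $V$-module is a vector space $W$ with a linear map $Y_W:V\to(\mathrm{End}\,W)[[x,x^{-1}]]$ such that $Y_W(v,x)w\in W((x))$, $Y_W(\mathbf 1,x)=\mathrm{id}_W$, and the Jacobi identity $x_0^{-1}\delta(\frac{x_1-x_2}{x_0})Y_W(u,x_1)Y_W(v,x_2)-x_0^{-1}\delta(\frac{x_2-x_1}{-x_0})Y_W(v,x_2)Y_W(u,x_1)=x_2^{-1}\delta(\frac{x_1-x_0}{x_2})Y_W(Y(u,x_0)v,x_2)$ holds. For $v\in V$ set $Y^o(v,x)=Y_W(e^{xL(1)}(-x^{-2})^{L(0)}v,x^{-1})$; then $Y^o(v,x)w\in W((x^{-1}))$. For a nonzero complex number $z$, $\alpha\in W^*$ is a $P(z)$-linear functional if for all $v\in V,w\in W$ the series $\langle\alpha,Y^o(v,x)w\rangle$ converges absolutely in $|x|>|z|$ to a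 rational function in $\mathbb C[x,x^{-1},(x-z)^{-1}]$, and for each fixed $v$ the orders of the poles at $0$ and at $z$ of these rational functions are bounded independently of $w$. $\mathcal D_{P(z)}(W)$ is the space of $P(z)$-linear functionals on $W$. Let $\iota_{x;\infty}$ and $\iota_{x;0}$ be the injective maps from the field $\mathbb C(x)$ of rational functions to Laurent series sending a rational function to its Laurent expansion at $x=\infty$ and at $x=0$, respectively. For $v\in V$, $\alpha\in\mathcal D_{P(z)}(W)$, $w\in W$, let $f_{v,\alpha,w}=\iota_{x;\infty}^{-1}\langle\alpha,Y^o(v,x)w\rangle$; define $Y^R_{P(z)}(v,x)\alpha,\ Y^L_{P(z)}(v,x)\alpha\in W^*[[x,x^{-1}]]$ by $\langle Y^R_{P(z)}(v,x)\alpha,w\rangle=\iota_{x;0}f_{v,\alpha,w}(x)$ and $\langle Y^L_{P(z)}(v,x)\alpha,w\rangle=\iota_{x;0}\big(f_{v,\alpha,w}(x+z)\big)$. Both $Y^R_{P(z)}(v,x)$ and $Y^L_{P(z)}(v,x)$ map $\mathcal D_{P(z)}(W)$ into $\mathcal D_{P(z)}(W)((x))$. *)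

theory Defs
  imports "HOL-Analysis.Analysis" "HOL-Library.Groups_Big_Fun"
          "HOL-Computational_Algebra.Polynomial"
begin

(* A complex vector space is a type 'a::ab_group_add together with a scalar
   multiplication s :: complex => 'a => 'a satisfying vector_space s.
   A vertex operator Y(u,x) = sum_n u_n x^(-n-1) is encoded by its modes:
   Y u n w = u_n w. *)

text \<open>Component form (coefficient of x0^(-l-1) x1^(-m-1) x2^(-n-1)) of the
  Jacobi identity for Y (on V) and YW (on W).\<close>
definition jacobi_identity ::
  "(complex \<Rightarrow> 'w::ab_group_add \<Rightarrow> 'w) \<Rightarrow> ('v \<Rightarrow> int \<Rightarrow> 'v \<Rightarrow> 'v)
   \<Rightarrow> ('v \<Rightarrow> int \<Rightarrow> 'w \<Rightarrow> 'w) \<Rightarrow> bool" where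
  "jacobi_identity sW Y YW \<longleftrightarrow>
     (\<forall>u v w (l::int) (m::int) (n::int).
        Sum_any (\<lambda>i::nat. sW ((of_int m :: complex) gchoose i)
                              (YW (Y u (l + int i) v) (m + n - int i) w))
      = Sum_any (\<lambda>i::nat. sW ((-1) ^ i * ((of_int l :: complex) gchoose i))
                  (YW u (l + m - int i) (YW v (n + int i) w)
                   - sW ((-1::complex) powi l) (YW v (l + n - int i) (YW u (m + int i) w)))))"

text \<open>L(n) = omega_(n+1), since Y(omega,x) = sum L(n) x^(-n-2).\<close>
definition Lop :: "('v \<Rightarrow> int \<Rightarrow> 'v \<Rightarrow> 'v) \<Rightarrow> 'v \<Rightarrow> int \<Rightarrow> 'v \<Rightarrow> 'v" where
  "Lop Y om n = Y om (n + 1)"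

definition Vgr :: "(complex \<Rightarrow> 'v::ab_group_add \<Rightarrow> 'v) \<Rightarrow> ('v \<Rightarrow> int \<Rightarrow> 'v \<Rightarrow> 'v)
                   \<Rightarrow> 'v \<Rightarrow> int \<Rightarrow> 'v set" where
  "Vgr sV Y om n = {v. Lop Y om 0 v = sV (of_int n) v}"

definition is_VOA :: "(complex \<Rightarrow> 'v::ab_group_add \<Rightarrow> 'v) \<Rightarrow> ('v \<Rightarrow> int \<Rightarrow> 'v \<Rightarrow> 'v)
                      \<Rightarrow> 'v \<Rightarrow> 'v \<Rightarrow> complex \<Rightarrow> bool" where
  "is_VOA sV Y vac om c \<longleftrightarrow>
     vector_space sV \<and>
     (\<forall>n w. Vector_Spaces.linear sV sV (\<lambda>u. Y u n w)) \<and>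
     (\<forall>u n. Vector_Spaces.linear sV sV (Y u n)) \<and>
     (\<forall>u v. \<exists>N. \<forall>n\<ge>N. Y u n v = 0) \<and>
     (\<forall>n. Y vac n = (if n = -1 then id else (\<lambda>_. 0))) \<and>
     (\<forall>u. Y u (-1) vac = u \<and> (\<forall>n\<ge>0. Y u n vac = 0)) \<and>
     jacobi_identity sV Y Y \<and>
     (\<forall>m n v. Lop Y om m (Lop Y om n v) - Lop Y om n (Lop Y om m v)
              = sV (of_int (m - n)) (Lop Y om (m + n) v)
                + (if m + n = 0 then sV ((of_int m ^ 3 - of_int m) / 12 * c) v else 0)) \<and>
     (\<forall>u n w. Y (Lop Y om (-1) u) n w = sV (- of_int n) (Y u (n - 1) w)) \<and>
     om \<in> Vgr sV Y om 2 \<and>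
     (\<forall>v. \<exists>f. finite {k. f k \<noteq> 0} \<and> (\<forall>k. f k \<in> Vgr sV Y om k) \<and> v = Sum_any f) \<and>
     (\<forall>n. \<exists>B. finite B \<and> Vgr sV Y om n \<subseteq> module.span sV B) \<and>
     (\<exists>N. \<forall>n<N. Vgr sV Y om n = {0})"

definition is_weak_module :: "(complex \<Rightarrow> 'v::ab_group_add \<Rightarrow> 'v) \<Rightarrow> ('v \<Rightarrow> int \<Rightarrow> 'v \<Rightarrow> 'v)
     \<Rightarrow> 'v \<Rightarrow> (complex \<Rightarrow> 'w::ab_group_add \<Rightarrow> 'w) \<Rightarrow> ('v \<Rightarrow> int \<Rightarrow> 'w \<Rightarrow> 'w) \<Rightarrow> bool" where
  "is_weak_module sV Y vac sW YW \<longleftrightarrow>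
     vector_space sW \<and>
     (\<forall>n w. Vector_Spaces.linear sV sW (\<lambda>u. YW u n w)) \<and>
     (\<forall>u n. Vector_Spaces.linear sW sW (YW u n)) \<and>
     (\<forall>u w. \<exists>N. \<forall>n\<ge>N. YW u n w = 0) \<and>
     (\<forall>n. YW vac n = (if n = -1 then id else (\<lambda>_. 0))) \<and>
     jacobi_identity sW Y YW"

definition hproj :: "(complex \<Rightarrow> 'v::ab_group_add \<Rightarrow> 'v) \<Rightarrow> ('v \<Rightarrow> int \<Rightarrow> 'v \<Rightarrow> 'v)
                     \<Rightarrow> 'v \<Rightarrow> int \<Rightarrow> 'v \<Rightarrow> 'v" where
  "hproj sV Y om n v = (THE c. \<exists>f. finite {k. f k \<noteq> 0} \<and> (\<forall>k. f k \<in> Vgr sV Y om k)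
                                   \<and> v = Sum_any f \<and> c = f n)"

text \<open>Coefficient of x^p in Y^o(v,x) w = Y_W(e^(x L(1)) (-x^(-2))^(L(0)) v, x^(-1)) w:
  sum over k, j of (-1)^k/j! (L(1)^j v_(k))_(p-j+2k-1) w.\<close>
definition Yo :: "(complex \<Rightarrow> 'v::ab_group_add \<Rightarrow> 'v) \<Rightarrow> ('v \<Rightarrow> int \<Rightarrow> 'v \<Rightarrow> 'v) \<Rightarrow> 'v
     \<Rightarrow> (complex \<Rightarrow> 'w::ab_group_add \<Rightarrow> 'w) \<Rightarrow> ('v \<Rightarrow> int \<Rightarrow> 'w \<Rightarrow> 'w)
     \<Rightarrow> 'v \<Rightarrow> int \<Rightarrow> 'w \<Rightarrow> 'w" where
  "Yo sV Y om sW YW v p w =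
     Sum_any (\<lambda>(k::int, j::nat). sW ((-1::complex) powi k / of_nat (fact j))
        (YW ((Lop Y om 1 ^^ j) (hproj sV Y om k v)) (p - int j + 2 * k - 1) w))"

definition DPz :: "(complex \<Rightarrow> 'v::ab_group_add \<Rightarrow> 'v) \<Rightarrow> ('v \<Rightarrow> int \<Rightarrow> 'v \<Rightarrow> 'v) \<Rightarrow> 'v
     \<Rightarrow> (complex \<Rightarrow> 'w::ab_group_add \<Rightarrow> 'w) \<Rightarrow> ('v \<Rightarrow> int \<Rightarrow> 'w \<Rightarrow> 'w)
     \<Rightarrow> complex \<Rightarrow> ('w \<Rightarrow> complex) set" where
  "DPz sV Y om sW YW z = {\<alpha>. Vector_Spaces.linear sW (*) \<alpha> \<and>
     (\<forall>v. \<exists>M N :: nat. \<forall>w. \<exists>P :: complex poly. \<forall>x. norm z < norm x \<longrightarrow>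
        ((\<lambda>p. \<alpha> (Yo sV Y om sW YW v p w) * x powi p)
           has_sum (poly P x / (x ^ M * (x - z) ^ N))) UNIV)}"

text \<open>iota_{x;0} of iota_{x;infinity}^{-1} c, and iota_{x;0} of (iota_{x;infinity}^{-1} c)(x+z).\<close>
definition expR :: "complex \<Rightarrow> (int \<Rightarrow> complex) \<Rightarrow> int \<Rightarrow> complex" where
  "expR z c = (THE d. \<exists>(P :: complex poly) (M :: nat) (N :: nat).
      (\<forall>x. norm z < norm x \<longrightarrow>
         ((\<lambda>p. c p * x powi p) has_sum (poly P x / (x ^ M * (x - z) ^ N))) UNIV) \<and>
      (\<exists>K. \<forall>k<K. d k = 0) \<and>
      (\<forall>x. 0 < norm x \<and> norm x < norm z \<longrightarrow>
         ((\<lambda>p. d p * x powi p) has_sum (poly P x / (x ^ M * (x - z) ^ N))) UNIV))"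

definition expL :: "complex \<Rightarrow> (int \<Rightarrow> complex) \<Rightarrow> int \<Rightarrow> complex" where
  "expL z c = (THE d. \<exists>(P :: complex poly) (M :: nat) (N :: nat).
      (\<forall>x. norm z < norm x \<longrightarrow>
         ((\<lambda>p. c p * x powi p) has_sum (poly P x / (x ^ M * (x - z) ^ N))) UNIV) \<and>
      (\<exists>K. \<forall>k<K. d k = 0) \<and>
      (\<forall>y. 0 < norm y \<and> norm y < norm z \<longrightarrow>
         ((\<lambda>p. d p * y powi p) has_sum (poly P (y + z) / ((y + z) ^ M * y ^ N))) UNIV))"

text \<open>Coefficient of x^n in Y^R_{P(z)}(v,x) alpha and Y^L_{P(z)}(v,x) alpha.\<close>
definition YR :: "(complex \<Rightarrow> 'v::ab_group_add \<Rightarrow> 'v) \<Rightarrow> ('v \<Rightarrow> int \<Rightarrow> 'v \<Rightarrow> 'v) \<Rightarrow> 'v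
     \<Rightarrow> (complex \<Rightarrow> 'w::ab_group_add \<Rightarrow> 'w) \<Rightarrow> ('v \<Rightarrow> int \<Rightarrow> 'w \<Rightarrow> 'w)
     \<Rightarrow> complex \<Rightarrow> 'v \<Rightarrow> int \<Rightarrow> ('w \<Rightarrow> complex) \<Rightarrow> ('w \<Rightarrow> complex)" where
  "YR sV Y om sW YW z v n \<alpha> = (\<lambda>w. expR z (\<lambda>p. \<alpha> (Yo sV Y om sW YW v p w)) n)"

definition YL :: "(complex \<Rightarrow> 'v::ab_group_add \<Rightarrow> 'v) \<Rightarrow> ('v \<Rightarrow> int \<Rightarrow> 'v \<Rightarrow> 'v) \<Rightarrow> 'v
     \<Rightarrow> (complex \<Rightarrow> 'w::ab_group_add \<Rightarrow> 'w) \<Rightarrow> ('v \<Rightarrow> int \<Rightarrow> 'w \<Rightarrow> 'w)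
     \<Rightarrow> complex \<Rightarrow> 'v \<Rightarrow> int \<Rightarrow> ('w \<Rightarrow> complex) \<Rightarrow> ('w \<Rightarrow> complex)" where
  "YL sV Y om sW YW z v n \<alpha> = (\<lambda>w. expL z (\<lambda>p. \<alpha> (Yo sV Y om sW YW v p w)) n)"

end

theory Submission
  imports Defs "HOL-Complex_Analysis.Complex_Analysis"
begin


lemma hs_shift:
  fixes c :: "int \<Rightarrow> complex"
  assumes x: "x \<noteq> 0" and h: "((\<lambda>p. c p * x powi p) has_sum S) UNIV"
  shows "((\<lambda>p. c (p - a) * x powi p) has_sum (x powi a * S)) UNIV"
proof -
  have "((\<lambda>p. x powi a * (c p * x powi p)) has_sum (x powi a * S)) UNIV"
    by (rule has_sum_cmult_right[OF h])
  moreover have "bij_betw (\<lambda>p::int. p - a) UNIV UNIV"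
    by (rule bij_betwI[where g="\<lambda>p. p + a"]) auto
  ultimately have "((\<lambda>p. x powi a * (c (p - a) * x powi (p - a))) has_sum (x powi a * S)) UNIV"
    using has_sum_reindex_bij_betw[of "\<lambda>p. p - a" UNIV UNIV "\<lambda>p. x powi a * (c p * x powi p)"] by simp
  moreover have "\<And>p. x powi a * (c (p - a) * x powi (p - a)) = c (p - a) * x powi p"
    using x by (simp add: power_int_diff field_simps)
  ultimately show ?thesis by simp
qed


lemma hs_nat_int:
  fixes a :: "nat \<Rightarrow> complex"
  assumes h: "((\<lambda>n. a n * x ^ n) has_sum S) UNIV"
  shows "((\<lambda>p. (if 0 \<le> p then a (nat p) else 0) * x powi p) has_sum S) UNIV"
proof -
  have b: "bij_betw int UNIV {0..}"
    by (rule bij_betwI[where g=nat]) auto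
  have "((\<lambda>n. (if 0 \<le> int n then a (nat (int n)) else 0) * x powi (int n)) has_sum S) UNIV"
    using h by simp
  then have "((\<lambda>p. (if 0 \<le> p then a (nat p) else 0) * x powi p) has_sum S) {0..}"
    using has_sum_reindex_bij_betw[OF b, of "\<lambda>p. (if 0 \<le> p then a (nat p) else 0) * x powi p"] by simp
  then show ?thesis
    by (subst has_sum_cong_neutral[where T="{0..}"]) auto
qed

lemma holo_expansion:
  fixes g :: "complex \<Rightarrow> complex"
  assumes "g holomorphic_on ball 0 r"
  shows "\<exists>a::nat\<Rightarrow>complex. \<forall>x\<in>ball 0 r. ((\<lambda>n. a n * x^n) has_sum g x) UNIV"
proof (intro exI ballI)
  fix x :: complex assume x: "x \<in> ball 0 r"
  define a where "a n = (deriv ^^ n) g 0 / fact n" for n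
  define r' where "r' = (norm x + r) / 2"
  have r'1: "norm x < r'" "r' < r" using x by (auto simp: r'_def)
  have r': "norm x < r'" "r' < r" "0 \<le> r'" using r'1 norm_ge_zero[of x] by linarith+
  have "complex_of_real r' \<in> ball 0 r" using r' by (auto simp: dist_norm)
  then have "(\<lambda>n. a n * (complex_of_real r' - 0)^n) sums g (complex_of_real r')"
    unfolding a_def by (rule holomorphic_power_series[OF assms])
  then have "summable (\<lambda>n. a n * (complex_of_real r')^n)" by (auto simp: sums_iff)
  then have "conv_radius a \<ge> norm (complex_of_real r')" by (rule conv_radius_geI)
  then have "ereal (norm x) < conv_radius a" using r'
    using order.strict_trans2[of "ereal (norm x)" "ereal r'" "conv_radius a"] by simp
  then have sn: "summable (\<lambda>n. norm (a n * x^n))" by (rule abs_summable_in_conv_radius)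
  have "(\<lambda>n. a n * (x - 0)^n) sums g x"
    unfolding a_def by (rule holomorphic_power_series[OF assms x])
  then show "((\<lambda>n. a n * x^n) has_sum g x) UNIV"
    using norm_summable_imp_has_sum[OF sn] by simp
qed

lemma lt_unique:
  fixes d :: "int \<Rightarrow> complex"
  assumes dK: "\<forall>k<K. d k = 0" and r: "r > 0"
    and h: "\<forall>x. 0 < norm x \<and> norm x < r \<longrightarrow> ((\<lambda>p. d p * x powi p) has_sum 0) UNIV"
  shows "d = (\<lambda>_. 0)"
proof -
  define a where "a n = d (int n + K)" for n
  have sa: "(\<lambda>n. a n * x^n) sums 0" if x: "0 < norm x" "norm x < r" for x
  proof -
    have "((\<lambda>p. d (p - (-K)) * x powi p) has_sum (x powi (-K) * 0)) UNIV"
      by (rule hs_shift) (use x h in auto)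
    then have h1: "((\<lambda>p. d (p + K) * x powi p) has_sum 0) UNIV" by simp
    have b: "bij_betw int UNIV {0..}"
      by (rule bij_betwI[where g=nat]) auto
    have "((\<lambda>p. d (p + K) * x powi p) has_sum 0) {0..}"
      using h1 by (subst has_sum_cong_neutral[where T=UNIV]) (auto simp: dK)
    then have "((\<lambda>n. d (int n + K) * x powi (int n)) has_sum 0) UNIV"
      using has_sum_reindex_bij_betw[OF b, of "\<lambda>p. d (p + K) * x powi p"] by simp
    then have "((\<lambda>n. a n * x ^ n) has_sum 0) UNIV" by (simp add: a_def)
    then show ?thesis by (rule has_sum_imp_sums)
  qed
  define F where "F = Abs_fps a"
  have xr: "0 < norm (complex_of_real (r/2))" "norm (complex_of_real (r/2)) < r" using r by auto
  have "summable (\<lambda>n. a n * (complex_of_real (r/2))^n)" using sa[OF xr] by (auto simp: sums_iff)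
  then have "conv_radius a \<ge> norm (complex_of_real (r/2))" by (rule conv_radius_geI)
  then have cr: "fps_conv_radius F > 0" using r
    by (auto simp: F_def fps_conv_radius_def intro: order.strict_trans2[rotated])
  have ev0: "eval_fps F x = 0" if "0 < norm x" "norm x < r" for x
    using sa[OF that] by (simp add: eval_fps_def F_def sums_iff)
  have "continuous (at 0 within UNIV) (eval_fps F)"
    by (rule continuous_eval_fps) (use cr in \<open>auto simp: zero_ereal_def\<close>)
  then have "(eval_fps F \<longlongrightarrow> eval_fps F 0) (at 0)" by (simp add: continuous_within)
  moreover have "eventually (\<lambda>x. eval_fps F x = 0) (at 0)"
    unfolding eventually_at using r by (intro exI[of _ r]) (auto simp: dist_norm ev0)
  ultimately have "((\<lambda>_. 0) \<longlongrightarrow> eval_fps F 0) (at (0::complex))"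
    by (auto elim: Lim_transform_eventually)
  then have e0: "eval_fps F 0 = 0" by (simp add: tendsto_const_iff)
  have all0: "\<forall>x. norm x < r \<longrightarrow> eval_fps F x = 0" using ev0 e0 by (metis norm_eq_zero zero_less_norm_iff)
  have "eventually (\<lambda>x. eval_fps F x = 0) (nhds 0)"
    unfolding eventually_nhds_metric using r all0
    by (intro exI[of _ r]) (auto simp: dist_norm)
  then have "(\<lambda>_. 0) has_fps_expansion F"
    using cr unfolding has_fps_expansion_def by simp
  moreover have "(\<lambda>_. 0) has_fps_expansion (0 :: complex fps)"
    unfolding has_fps_expansion_def by simp
  ultimately have "F = 0" by (rule fps_expansion_unique_complex)
  then have a0: "a n = 0" for n by (metis F_def fps_nth_Abs_fps fps_zero_nth)
  show ?thesis
  proof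
    fix k show "d k = 0"
    proof (cases "k < K")
      case True then show ?thesis using dK by auto
    next
      case False
      then have "k = int (nat (k - K)) + K" by auto
      then show ?thesis using a0[of "nat (k - K)"] unfolding a_def by metis
    qed
  qed
qed



lemma ut_unique:
  fixes c :: "int \<Rightarrow> complex"
  assumes cP: "\<forall>p>P0. c p = 0" and R: "R \<ge> 0"
    and h: "\<forall>x. R < norm x \<longrightarrow> ((\<lambda>p. c p * x powi p) has_sum 0) UNIV"
  shows "c = (\<lambda>_. 0)"
proof -
  define d where "d q = c (-q)" for q
  have "d = (\<lambda>_. 0)"
  proof (rule lt_unique[of "-P0" d "1/(R+1)"])
    show "\<forall>k < -P0. d k = 0" using cP by (simp add: d_def)
    show "1/(R+1) > 0" using R by simp
    show "\<forall>t. 0 < norm t \<and> norm t < 1/(R+1) \<longrightarrow> ((\<lambda>p. d p * t powi p) has_sum 0) UNIV"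
    proof (intro allI impI)
      fix t :: complex assume t: "0 < norm t \<and> norm t < 1/(R+1)"
      then have "norm t * (R + 1) < 1" using R by (simp add: field_simps)
      then have "R + 1 < 1 / norm t" using t by (simp add: field_simps)
      then have "R < norm (inverse t)" by (simp add: norm_inverse divide_inverse)
      then have hh: "((\<lambda>p. c p * (inverse t) powi p) has_sum 0) UNIV" using h by auto
      have b: "bij_betw uminus UNIV (UNIV::int set)" by (rule bij_betwI[where g=uminus]) auto
      have "((\<lambda>q. c (-q) * (inverse t) powi (-q)) has_sum 0) UNIV"
        using has_sum_reindex_bij_betw[OF b, of "\<lambda>p. c p * (inverse t) powi p"] hh by simp
      then show "((\<lambda>p. d p * t powi p) has_sum 0) UNIV"
        by (simp add: d_def power_int_minus power_int_inverse)
    qed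
  qed
  then show ?thesis by (metis d_def minus_minus)
qed

lemma gR_ex:
  fixes z :: complex and k :: int
  assumes z: "z \<noteq> 0"
  shows "\<exists>d. (\<forall>p < k - int M. d p = 0) \<and> (\<forall>x. 0 < norm x \<and> norm x < norm z \<longrightarrow>
     ((\<lambda>p. d p * x powi p) has_sum (x powi k / (x^M * (x - z)^N))) UNIV)"
proof -
  have "(\<lambda>x. 1 / (x - z)^N) holomorphic_on ball 0 (norm z)"
    by (intro holomorphic_intros) (auto simp: dist_norm)
  then obtain a where a: "\<forall>x\<in>ball 0 (norm z). ((\<lambda>n. a n * x^n) has_sum (1/(x-z)^N)) UNIV"
    using holo_expansion by blast
  define c0 where "c0 p = (if 0 \<le> p then a (nat p) else 0)" for p
  define d where "d p = c0 (p - (k - int M))" for p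
  show ?thesis
  proof (intro exI[of _ d] conjI allI impI)
    fix p assume "p < k - int M" then show "d p = 0" by (simp add: d_def c0_def)
  next
    fix x :: complex assume x: "0 < norm x \<and> norm x < norm z"
    have "((\<lambda>p. c0 p * x powi p) has_sum (1/(x-z)^N)) UNIV"
      unfolding c0_def by (rule hs_nat_int) (use a x in auto)
    then have "((\<lambda>p. c0 (p - (k - int M)) * x powi p) has_sum (x powi (k - int M) * (1/(x-z)^N))) UNIV"
      by (rule hs_shift[rotated]) (use x in auto)
    moreover have "x powi (k - int M) * (1/(x-z)^N) = x powi k / (x^M * (x-z)^N)"
      using x by (simp add: power_int_diff field_simps)
    ultimately show "((\<lambda>p. d p * x powi p) has_sum (x powi k / (x^M * (x - z)^N))) UNIV"
      by (simp add: d_def)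
  qed
qed

lemma gL_ex:
  fixes z :: complex and k :: int
  assumes z: "z \<noteq> 0"
  shows "\<exists>d. (\<forall>p < - int N. d p = 0) \<and> (\<forall>y. 0 < norm y \<and> norm y < norm z \<longrightarrow>
     ((\<lambda>p. d p * y powi p) has_sum ((y + z) powi k / ((y + z)^M * y^N))) UNIV)"
proof -
  have nz: "y + z \<noteq> 0" if "y \<in> ball 0 (norm z)" for y
  proof
    assume "y + z = 0" then have "y = - z" by (simp add: add_eq_0_iff)
    then show False using that by (simp add: dist_norm)
  qed
  have "(\<lambda>y. (y + z) powi k / (y + z)^M) holomorphic_on ball 0 (norm z)"
    by (intro holomorphic_intros) (use nz in auto)
  then obtain a where a: "\<forall>y\<in>ball 0 (norm z). ((\<lambda>n. a n * y^n) has_sum ((y + z) powi k / (y + z)^M)) UNIV"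
    using holo_expansion by blast
  define c0 where "c0 p = (if 0 \<le> p then a (nat p) else 0)" for p
  define d where "d p = c0 (p - (- int N))" for p
  show ?thesis
  proof (intro exI[of _ d] conjI allI impI)
    fix p assume "p < - int N" then show "d p = 0" by (simp add: d_def c0_def)
  next
    fix y :: complex assume y: "0 < norm y \<and> norm y < norm z"
    have "((\<lambda>p. c0 p * y powi p) has_sum ((y + z) powi k / (y + z)^M)) UNIV"
      unfolding c0_def by (rule hs_nat_int) (use a y in auto)
    then have "((\<lambda>p. c0 (p - (- int N)) * y powi p) has_sum (y powi (- int N) * ((y + z) powi k / (y + z)^M))) UNIV"
      by (rule hs_shift[rotated]) (use y in auto)
    moreover have "y powi (- int N) * ((y + z) powi k / (y + z)^M) = (y + z) powi k / ((y + z)^M * y^N)"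
      using y by (simp add: power_int_minus field_simps)
    ultimately show "((\<lambda>p. d p * y powi p) has_sum ((y + z) powi k / ((y + z)^M * y^N))) UNIV"
      by (simp add: d_def)
  qed
qed

lemma gI_ex:
  fixes z :: complex and k :: int
  assumes z: "z \<noteq> 0"
  shows "\<exists>c. (\<forall>p > k - int M - int N. c p = 0) \<and> (\<forall>x. norm z < norm x \<longrightarrow>
     ((\<lambda>p. c p * x powi p) has_sum (x powi k / (x^M * (x - z)^N))) UNIV)"
proof -
  have nz: "1 - z * t \<noteq> 0" if "t \<in> ball 0 (1 / norm z)" for t
  proof
    assume "1 - z * t = 0" then have "z * t = 1" by simp
    then have "norm z * norm t = 1" by (metis norm_mult norm_one)
    moreover have "norm t < 1 / norm z" using that by (simp add: dist_norm)
    ultimately show False using z by (simp add: field_simps)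
  qed
  have "(\<lambda>t. 1 / (1 - z * t)^N) holomorphic_on ball 0 (1 / norm z)"
    by (intro holomorphic_intros) (use nz in auto)
  then obtain a where a: "\<forall>t\<in>ball 0 (1 / norm z). ((\<lambda>n. a n * t^n) has_sum (1 / (1 - z * t)^N)) UNIV"
    using holo_expansion by blast
  define c0 where "c0 p = (if 0 \<le> p then a (nat p) else 0)" for p
  define d where "d p = c0 (p - (int M + int N - k))" for p
  define c where "c p = d (- p)" for p
  show ?thesis
  proof (intro exI[of _ c] conjI allI impI)
    fix p assume "p > k - int M - int N" then show "c p = 0" by (simp add: c_def d_def c0_def)
  next
    fix x :: complex assume x: "norm z < norm x"
    define t where "t = inverse x"
    have x0: "x \<noteq> 0" using x by auto
    have nt: "norm t = 1 / norm x" by (simp add: t_def norm_inverse divide_inverse)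
    have "1 / norm x < 1 / norm z" using x z by (intro divide_strict_left_mono) (auto intro!: mult_pos_pos)
    then have t: "0 < norm t" "norm t < 1 / norm z" using x0 nt by auto
    have "((\<lambda>p. c0 p * t powi p) has_sum (1 / (1 - z * t)^N)) UNIV"
      unfolding c0_def by (rule hs_nat_int) (use a t in \<open>auto simp: dist_norm\<close>)
    then have "((\<lambda>p. c0 (p - (int M + int N - k)) * t powi p) has_sum (t powi (int M + int N - k) * (1 / (1 - z * t)^N))) UNIV"
      by (rule hs_shift[rotated]) (use t in auto)
    then have hd: "((\<lambda>p. d p * t powi p) has_sum (t powi (int M + int N - k) * (1 / (1 - z * t)^N))) UNIV"
      by (simp add: d_def)
    have b: "bij_betw uminus UNIV (UNIV::int set)" by (rule bij_betwI[where g=uminus]) auto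
    have "((\<lambda>q. c (- q) * x powi (- q)) has_sum (t powi (int M + int N - k) * (1 / (1 - z * t)^N))) UNIV"
      using hd by (simp add: c_def t_def power_int_minus power_int_inverse)
    then have "((\<lambda>p. c p * x powi p) has_sum (t powi (int M + int N - k) * (1 / (1 - z * t)^N))) UNIV"
      using has_sum_reindex_bij_betw[OF b, of "\<lambda>p. c p * x powi p"] by simp
    moreover have "t powi (int M + int N - k) * (1 / (1 - z * t)^N) = x powi k / (x^M * (x - z)^N)"
    proof -
      have e1: "t powi (int M + int N - k) = x powi k / (x^M * x^N)"
        using x0 by (simp add: t_def power_int_inverse power_int_diff power_int_add power_int_minus field_simps)
      have e2: "1 - z * t = (x - z) / x" using x0 by (simp add: t_def field_simps)
      have xz: "x - z \<noteq> 0" using x by auto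
      show ?thesis unfolding e1 e2 using x0 xz by (simp add: power_divide field_simps)
    qed
    ultimately show "((\<lambda>p. c p * x powi p) has_sum (x powi k / (x^M * (x - z)^N))) UNIV" by simp
  qed
qed



lemma hs_diff:
  fixes f g :: "'a \<Rightarrow> complex"
  assumes "(f has_sum a) A" "(g has_sum b) A"
  shows "((\<lambda>x. f x - g x) has_sum (a - b)) A"
proof -
  have "((\<lambda>x. - g x) has_sum (- b)) A" using assms(2) by (simp add: has_sum_uminus)
  from has_sum_add[OF assms(1) this] show ?thesis by simp
qed

lemma rat_ident:
  fixes P1 P2 :: "complex poly" and z :: complex
  assumes h: "\<forall>x. norm z < norm x \<longrightarrow> poly P1 x / (x^M1 * (x-z)^N1) = poly P2 x / (x^M2 * (x-z)^N2)"
    and x: "x \<noteq> 0" "x \<noteq> z"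
  shows "poly P1 x / (x^M1 * (x-z)^N1) = poly P2 x / (x^M2 * (x-z)^N2)"
proof -
  define Q where "Q = P1 * ([:0,1:]^M2 * [:-z,1:]^N2) - P2 * ([:0,1:]^M1 * [:-z,1:]^N1)"
  have pQ: "poly Q y = poly P1 y * (y^M2 * (y-z)^N2) - poly P2 y * (y^M1*(y-z)^N1)" for y
    by (simp add: Q_def)
  have Q0: "poly Q y = 0" if "norm z < norm y" for y
  proof -
    have "y \<noteq> 0" "y \<noteq> z" using that by auto
    then have nz: "y^M1 * (y-z)^N1 \<noteq> 0" "y^M2 * (y-z)^N2 \<noteq> 0" by auto
    have "poly P1 y / (y^M1 * (y-z)^N1) = poly P2 y / (y^M2 * (y-z)^N2)" using h that by blast
    then have "poly P1 y * (y^M2 * (y-z)^N2) = poly P2 y * (y^M1*(y-z)^N1)"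
      using frac_eq_eq[OF nz] by simp
    then show ?thesis by (simp add: pQ)
  qed
  have "Q = 0"
  proof (rule ccontr)
    assume "Q \<noteq> 0"
    then have fin: "finite {y. poly Q y = 0}" by (rule poly_roots_finite)
    define f where "f n = complex_of_real (norm z + 1 + real n)" for n
    have inj: "inj f" by (auto simp: inj_def f_def)
    have "norm z < norm (f n)" for n
    proof -
      have "norm (f n) = norm z + 1 + real n" unfolding f_def
        by (simp only: norm_of_real) (simp add: abs_of_nonneg)
      then show ?thesis by simp
    qed
    then have "range f \<subseteq> {y. poly Q y = 0}" using Q0 by auto
    then have "finite (range f)" using fin finite_subset by blast
    then have "finite (UNIV :: nat set)" using finite_imageD[OF _ inj] by blast
    then show False by simp
  qed
  then have "poly P1 x * (x^M2*(x-z)^N2) = poly P2 x * (x^M1*(x-z)^N1)" using pQ[of x] by simp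
  moreover have "x^M1 * (x-z)^N1 \<noteq> 0" "x^M2 * (x-z)^N2 \<noteq> 0" using x by auto
  ultimately show ?thesis using frac_eq_eq by metis
qed

lemma expR_char:
  fixes z :: complex and c d :: "int \<Rightarrow> complex"
  assumes z: "z \<noteq> 0"
   and hc: "\<forall>x. norm z < norm x \<longrightarrow> ((\<lambda>p. c p * x powi p) has_sum (poly P x / (x^M * (x-z)^N))) UNIV"
   and hd: "\<forall>k<K. d k = 0"
   and hd2: "\<forall>x. 0 < norm x \<and> norm x < norm z \<longrightarrow> ((\<lambda>p. d p * x powi p) has_sum (poly P x / (x^M * (x-z)^N))) UNIV"
  shows "expR z c = d"
  unfolding expR_def
proof (rule the_equality)
  show "\<exists>P M N. (\<forall>x. norm z < norm x \<longrightarrow> ((\<lambda>p. c p * x powi p) has_sum (poly P x / (x^M * (x-z)^N))) UNIV) \<and>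
      (\<exists>K. \<forall>k<K. d k = 0) \<and>
      (\<forall>x. 0 < norm x \<and> norm x < norm z \<longrightarrow> ((\<lambda>p. d p * x powi p) has_sum (poly P x / (x^M * (x-z)^N))) UNIV)"
    using hc hd hd2 by blast
next
  fix d' assume "\<exists>P M N. (\<forall>x. norm z < norm x \<longrightarrow> ((\<lambda>p. c p * x powi p) has_sum (poly P x / (x^M * (x-z)^N))) UNIV) \<and>
      (\<exists>K. \<forall>k<K. d' k = 0) \<and>
      (\<forall>x. 0 < norm x \<and> norm x < norm z \<longrightarrow> ((\<lambda>p. d' p * x powi p) has_sum (poly P x / (x^M * (x-z)^N))) UNIV)"
  then obtain P' M' N' K' where hc': "\<forall>x. norm z < norm x \<longrightarrow> ((\<lambda>p. c p * x powi p) has_sum (poly P' x / (x^M' * (x-z)^N'))) UNIV"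
    and hd': "\<forall>k<K'. d' k = 0"
    and hd2': "\<forall>x. 0 < norm x \<and> norm x < norm z \<longrightarrow> ((\<lambda>p. d' p * x powi p) has_sum (poly P' x / (x^M' * (x-z)^N'))) UNIV"
    by blast
  have "\<forall>x. norm z < norm x \<longrightarrow> poly P' x / (x^M' * (x-z)^N') = poly P x / (x^M * (x-z)^N)"
    using hc hc' has_sum_unique by blast
  then have eq: "poly P' x / (x^M' * (x-z)^N') = poly P x / (x^M * (x-z)^N)" if "x \<noteq> 0" "x \<noteq> z" for x
    by (rule rat_ident[OF _ that])
  have "(\<lambda>k. d' k - d k) = (\<lambda>_. 0)"
  proof (rule lt_unique[of "min K K'" _ "norm z"])
    show "\<forall>k<min K K'. d' k - d k = 0" using hd hd' by auto
    show "norm z > 0" using z by auto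
    show "\<forall>x. 0 < norm x \<and> norm x < norm z \<longrightarrow> ((\<lambda>p. (d' p - d p) * x powi p) has_sum 0) UNIV"
    proof (intro allI impI)
      fix x :: complex assume x: "0 < norm x \<and> norm x < norm z"
      then have "x \<noteq> 0" "x \<noteq> z" by auto
      have "((\<lambda>p. d' p * x powi p - d p * x powi p) has_sum
          (poly P' x / (x^M' * (x-z)^N') - poly P x / (x^M * (x-z)^N))) UNIV"
        by (rule hs_diff) (use hd2 hd2' x in auto)
      then show "((\<lambda>p. (d' p - d p) * x powi p) has_sum 0) UNIV"
        using eq[OF \<open>x \<noteq> 0\<close> \<open>x \<noteq> z\<close>] by (simp add: algebra_simps)
    qed
  qed
  then show "d' = d" by (auto simp: fun_eq_iff dest: fun_cong)
qed

lemma expL_char: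
  fixes z :: complex and c d :: "int \<Rightarrow> complex"
  assumes z: "z \<noteq> 0"
   and hc: "\<forall>x. norm z < norm x \<longrightarrow> ((\<lambda>p. c p * x powi p) has_sum (poly P x / (x^M * (x-z)^N))) UNIV"
   and hd: "\<forall>k<K. d k = 0"
   and hd2: "\<forall>y. 0 < norm y \<and> norm y < norm z \<longrightarrow> ((\<lambda>p. d p * y powi p) has_sum (poly P (y + z) / ((y + z)^M * y^N))) UNIV"
  shows "expL z c = d"
  unfolding expL_def
proof (rule the_equality)
  show "\<exists>P M N. (\<forall>x. norm z < norm x \<longrightarrow> ((\<lambda>p. c p * x powi p) has_sum (poly P x / (x^M * (x-z)^N))) UNIV) \<and>
      (\<exists>K. \<forall>k<K. d k = 0) \<and>
      (\<forall>y. 0 < norm y \<and> norm y < norm z \<longrightarrow> ((\<lambda>p. d p * y powi p) has_sum (poly P (y + z) / ((y + z)^M * y^N))) UNIV)"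
    using hc hd hd2 by blast
next
  fix d' assume "\<exists>P M N. (\<forall>x. norm z < norm x \<longrightarrow> ((\<lambda>p. c p * x powi p) has_sum (poly P x / (x^M * (x-z)^N))) UNIV) \<and>
      (\<exists>K. \<forall>k<K. d' k = 0) \<and>
      (\<forall>y. 0 < norm y \<and> norm y < norm z \<longrightarrow> ((\<lambda>p. d' p * y powi p) has_sum (poly P (y + z) / ((y + z)^M * y^N))) UNIV)"
  then obtain P' M' N' K' where hc': "\<forall>x. norm z < norm x \<longrightarrow> ((\<lambda>p. c p * x powi p) has_sum (poly P' x / (x^M' * (x-z)^N'))) UNIV"
    and hd': "\<forall>k<K'. d' k = 0"
    and hd2': "\<forall>y. 0 < norm y \<and> norm y < norm z \<longrightarrow> ((\<lambda>p. d' p * y powi p) has_sum (poly P' (y + z) / ((y + z)^M' * y^N'))) UNIV"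
    by blast
  have "\<forall>x. norm z < norm x \<longrightarrow> poly P' x / (x^M' * (x-z)^N') = poly P x / (x^M * (x-z)^N)"
    using hc hc' has_sum_unique by blast
  then have eq: "poly P' x / (x^M' * (x-z)^N') = poly P x / (x^M * (x-z)^N)" if "x \<noteq> 0" "x \<noteq> z" for x
    by (rule rat_ident[OF _ that])
  have "(\<lambda>k. d' k - d k) = (\<lambda>_. 0)"
  proof (rule lt_unique[of "min K K'" _ "norm z"])
    show "\<forall>k<min K K'. d' k - d k = 0" using hd hd' by auto
    show "norm z > 0" using z by auto
    show "\<forall>y. 0 < norm y \<and> norm y < norm z \<longrightarrow> ((\<lambda>p. (d' p - d p) * y powi p) has_sum 0) UNIV"
    proof (intro allI impI)
      fix y :: complex assume y: "0 < norm y \<and> norm y < norm z"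
      have n1: "y + z \<noteq> 0"
      proof
        assume "y + z = 0" then have "y = - z" by (simp add: add_eq_0_iff)
        then show False using y by simp
      qed
      have n2: "y + z \<noteq> z" using y by auto
      have "((\<lambda>p. d' p * y powi p - d p * y powi p) has_sum
          (poly P' (y + z) / ((y + z)^M' * y^N') - poly P (y + z) / ((y + z)^M * y^N))) UNIV"
        by (rule hs_diff) (use hd2 hd2' y in auto)
      then show "((\<lambda>p. (d' p - d p) * y powi p) has_sum 0) UNIV"
        using eq[OF n1 n2] by (simp add: algebra_simps)
    qed
  qed
  then show "d' = d" by (auto simp: fun_eq_iff dest: fun_cong)
qed



lemma hs_finsum:
  fixes f :: "'i \<Rightarrow> 'a \<Rightarrow> complex"
  assumes "finite I" "\<forall>i\<in>I. (f i has_sum s i) A"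
  shows "((\<lambda>x. \<Sum>i\<in>I. f i x) has_sum (\<Sum>i\<in>I. s i)) A"
  using assms
proof (induction I rule: finite_induct)
  case empty then show ?case by simp
next
  case (insert i I)
  then have "((\<lambda>x. f i x + (\<Sum>i\<in>I. f i x)) has_sum (s i + (\<Sum>i\<in>I. s i))) A"
    by (intro has_sum_add) auto
  then show ?case using insert by simp
qed

definition utr :: "(int \<Rightarrow> complex) \<Rightarrow> bool" where
  "utr c \<longleftrightarrow> (\<exists>P0. \<forall>p>P0. c p = 0)"

definition sx :: "(int \<Rightarrow> complex) \<Rightarrow> int \<Rightarrow> complex" where
  "sx c = (\<lambda>p. c (p - 1))"

definition Dz :: "complex \<Rightarrow> (int \<Rightarrow> complex) \<Rightarrow> int \<Rightarrow> complex" where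
  "Dz z c = (\<lambda>p. c (p - 1) - z * c p)"

primrec Op :: "complex \<Rightarrow> nat \<Rightarrow> nat \<Rightarrow> (int \<Rightarrow> complex) \<Rightarrow> int \<Rightarrow> complex" where
  "Op z M 0 c = (\<lambda>p. c (p - int M))"
| "Op z M (Suc N) c = Dz z (Op z M N c)"

definition lcomb :: "(complex \<times> int) list \<Rightarrow> (int \<Rightarrow> complex) \<Rightarrow> complex" where
  "lcomb xs c = sum_list (map (\<lambda>(a, i). a * c i) xs)"

lemma lcomb_simps[simp]:
  "lcomb [] c = 0" "lcomb ((a, i) # xs) c = a * c i + lcomb xs c" "lcomb (xs @ ys) c = lcomb xs c + lcomb ys c"
  by (auto simp: lcomb_def)

lemma lcomb_scale: "lcomb (map (\<lambda>(a, i). (b * a, i)) xs) c = b * lcomb xs c"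
  by (induction xs) (auto simp: algebra_simps)

lemma lcomb_negscale: "lcomb (map (\<lambda>(a, i). (- (b * a), i)) xs) c = - (b * lcomb xs c)"
  by (induction xs) (auto simp: algebra_simps)

lemma lcomb_shift: "lcomb (map (\<lambda>(a, i). (a, i - s)) xs) c = lcomb xs (\<lambda>p. c (p - s))"
  by (induction xs) auto

lemma lcomb_lin: "lcomb xs (\<lambda>p. a * f p + b * g p) = a * lcomb xs f + b * lcomb xs g"
  by (induction xs) (auto simp: algebra_simps)

lemma lcomb_sum: "lcomb xs (\<lambda>p. \<Sum>i\<in>I. f i p) = (\<Sum>i\<in>I. lcomb xs (f i))"
  by (induction xs) (auto simp: sum.distrib sum_distrib_left)

lemma lcomb_zero[simp]: "lcomb xs (\<lambda>_. 0) = 0"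
  by (induction xs) auto

lemma Op_lcomb: "\<exists>xs. \<forall>c. Op z M N c k = lcomb xs c"
proof (induction N arbitrary: k)
  case 0
  show ?case by (rule exI[of _ "[(1, k - int M)]"]) simp
next
  case (Suc N)
  obtain xs where xs: "\<forall>c. Op z M N c (k - 1) = lcomb xs c" using Suc by blast
  obtain ys where ys: "\<forall>c. Op z M N c k = lcomb ys c" using Suc by blast
  show ?case
    by (rule exI[of _ "xs @ map (\<lambda>(a, i). (- z * a, i)) ys"])
      (simp add: Dz_def xs ys lcomb_negscale)
qed

lemma Op_lin: "Op z M N (\<lambda>p. a * f p + b * g p) k = a * Op z M N f k + b * Op z M N g k"
  using Op_lcomb[of z M N k] lcomb_lin by metis

lemma Op_sum: "Op z M N (\<lambda>p. \<Sum>i\<in>I. f i p) k = (\<Sum>i\<in>I. Op z M N (f i) k)"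
proof -
  obtain xs where "\<forall>c. Op z M N c k = lcomb xs c" using Op_lcomb by blast
  then show ?thesis by (simp add: lcomb_sum)
qed

lemma Op_zero[simp]: "Op z M N (\<lambda>_. 0) k = 0"
  using Op_lcomb[of z M N k] lcomb_zero by metis

lemma Op_diff: "Op z M N (\<lambda>p. f p - g p) k = Op z M N f k - Op z M N g k"
  using Op_lin[of z M N 1 f "-1" g k] by simp

lemma Op_sx: "Op z M N (sx c) = sx (Op z M N c)"
  by (induction N) (auto simp: sx_def Dz_def fun_eq_iff diff_diff_eq add.commute)

lemma Op_SucM: "Op z (Suc M) N c = sx (Op z M N c)"
  by (induction N) (auto simp: sx_def Dz_def algebra_simps)

lemma Op_Dz: "Op z M N (Dz z c) = Dz z (Op z M N c)"
  by (induction N) (auto simp: Dz_def fun_eq_iff diff_diff_eq add.commute)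

lemma Op_utr:
  assumes "\<forall>p>P0. c p = 0"
  shows "\<forall>p>P0 + int M + int N. Op z M N c p = 0"
  using assms by (induction N) (auto simp: Dz_def)

lemma utr_Op: "utr c \<Longrightarrow> utr (Op z M N c)"
  unfolding utr_def using Op_utr by blast

lemma Dz_inj:
  assumes "\<forall>p>P0. c p = 0" "\<forall>p. Dz z c p = 0"
  shows "c = (\<lambda>_. 0)"
proof -
  have "\<forall>p>P0 - int n. c p = 0" for n
  proof (induction n)
    case 0 then show ?case using assms by simp
  next
    case (Suc n)
    show ?case
    proof (intro allI impI)
      fix p assume p: "p > P0 - int (Suc n)"
      then have "p + 1 > P0 - int n" by simp
      then have "c (p + 1) = 0" using Suc by blast
      moreover have "Dz z c (p + 1) = 0" using assms by blast
      ultimately show "c p = 0" by (simp add: Dz_def)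
    qed
  qed
  then show ?thesis
  proof -
    have "c p = 0" for p
    proof -
      have "p > P0 - int (nat (P0 - p + 1))" by simp
      then show ?thesis using \<open>\<And>n. \<forall>p>P0 - int n. c p = 0\<close> by blast
    qed
    then show ?thesis by auto
  qed
qed

lemma Op_inj:
  assumes "utr c" "\<forall>k. Op z M N c k = 0"
  shows "c = (\<lambda>_. 0)"
  using assms
proof (induction N arbitrary: c)
  case 0
  have "c x = 0" for x
  proof -
    have "Op z M 0 c (x + int M) = 0" using 0 by blast
    then show ?thesis by simp
  qed
  then show ?case by auto
next
  case (Suc N)
  obtain P0 where P0: "\<forall>p>P0. Op z M N c p = 0" using utr_Op[OF Suc.prems(1)] unfolding utr_def by blast
  have "Op z M N c = (\<lambda>_. 0)"
    by (rule Dz_inj[OF P0]) (use Suc.prems in simp)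
  then show ?case using Suc.IH[of c] Suc.prems(1) by simp
qed

lemma Op_has_sum:
  fixes c :: "int \<Rightarrow> complex"
  assumes x: "x \<noteq> 0" and h: "((\<lambda>p. c p * x powi p) has_sum S) UNIV"
  shows "((\<lambda>p. Op z M N c p * x powi p) has_sum (x^M * (x - z)^N * S)) UNIV"
proof (induction N)
  case 0
  show ?case using hs_shift[OF x h, of "int M"] by simp
next
  case (Suc N)
  have a: "((\<lambda>p. Op z M N c (p - 1) * x powi p) has_sum (x powi 1 * (x^M * (x - z)^N * S))) UNIV"
    by (rule hs_shift[OF x Suc])
  have b: "((\<lambda>p. z * (Op z M N c p * x powi p)) has_sum (z * (x^M * (x - z)^N * S))) UNIV"
    by (rule has_sum_cmult_right[OF Suc])
  have "((\<lambda>p. Op z M N c (p - 1) * x powi p - z * (Op z M N c p * x powi p)) has_sum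
     (x powi 1 * (x^M * (x - z)^N * S) - z * (x^M * (x - z)^N * S))) UNIV"
    by (rule hs_diff[OF a b])
  then show ?case by (simp add: Dz_def algebra_simps)
qed

definition pcoef :: "complex poly \<Rightarrow> int \<Rightarrow> complex" where
  "pcoef P k = (if 0 \<le> k then coeff P (nat k) else 0)"

lemma pcoef_has_sum:
  "((\<lambda>k. pcoef P k * x powi k) has_sum poly P x) UNIV"
proof (rule has_sum_finite_neutralI[where B="int ` {..degree P}"])
  show "finite (int ` {..degree P})" by simp
  show "int ` {..degree P} \<subseteq> UNIV" by simp
  show "\<And>k. k \<in> UNIV - int ` {..degree P} \<Longrightarrow> pcoef P k * x powi k = 0"
  proof -
    fix k assume "k \<in> UNIV - int ` {..degree P}"
    then have "k < 0 \<or> nat k > degree P" by (auto simp: image_iff) (metis atMost_iff int_nat_eq le_eq_less_or_eq linorder_not_less)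
    then show "pcoef P k * x powi k = 0" by (auto simp: pcoef_def coeff_eq_0)
  qed
  show "poly P x = (\<Sum>k\<in>int ` {..degree P}. pcoef P k * x powi k)"
    by (simp add: sum.reindex poly_altdef pcoef_def)
qed

lemma pcoef_utr: "utr (pcoef P)"
  unfolding utr_def pcoef_def
  by (rule exI[of _ "int (degree P)"]) (auto simp: coeff_eq_0)

lemma cls_coef:
  fixes c :: "int \<Rightarrow> complex"
  assumes z: "z \<noteq> 0" and u: "utr c"
    and hc: "\<forall>x. norm z < norm x \<longrightarrow> ((\<lambda>p. c p * x powi p) has_sum (poly P x / (x^M * (x-z)^N))) UNIV"
  shows "Op z M N c = pcoef P"
proof -
  have "(\<lambda>k. Op z M N c k - pcoef P k) = (\<lambda>_. 0)"
  proof -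
    obtain P1 where P1: "\<forall>p>P1. Op z M N c p = 0" using utr_Op[OF u] unfolding utr_def by blast
    obtain P2 where P2: "\<forall>p>P2. pcoef P p = 0" using pcoef_utr unfolding utr_def by blast
    show ?thesis
    proof (rule ut_unique[of "max P1 P2" _ "norm z"])
      show "\<forall>p>max P1 P2. Op z M N c p - pcoef P p = 0" using P1 P2 by simp
      show "norm z \<ge> 0" by simp
      show "\<forall>x. norm z < norm x \<longrightarrow> ((\<lambda>p. (Op z M N c p - pcoef P p) * x powi p) has_sum 0) UNIV"
      proof (intro allI impI)
        fix x :: complex assume x: "norm z < norm x"
        then have x0: "x \<noteq> 0" "x - z \<noteq> 0" by auto
        have "((\<lambda>p. Op z M N c p * x powi p) has_sum (x^M * (x - z)^N * (poly P x / (x^M * (x-z)^N)))) UNIV"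
          by (rule Op_has_sum) (use x0 hc x in auto)
        moreover have "x^M * (x - z)^N * (poly P x / (x^M * (x-z)^N)) = poly P x" using x0 by simp
        ultimately have "((\<lambda>p. Op z M N c p * x powi p - pcoef P p * x powi p) has_sum (poly P x - poly P x)) UNIV"
          using hs_diff pcoef_has_sum by fastforce
        then show "((\<lambda>p. (Op z M N c p - pcoef P p) * x powi p) has_sum 0) UNIV"
          by (simp add: algebra_simps)
      qed
    qed
  qed
  then show ?thesis by (auto simp: fun_eq_iff dest: fun_cong)
qed



lemma sum_shift_int: "(\<Sum>k\<in>{a..b::int}. f k) = (\<Sum>j\<in>{a-1..b-1}. f (j + 1))"
  by (rule sum.reindex_bij_witness[of _ "\<lambda>j. j + 1" "\<lambda>k. k - 1"]) auto

lemma hs_finsum_scaled: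
  fixes g :: "'i \<Rightarrow> int \<Rightarrow> complex"
  assumes "finite I" "\<And>i. i \<in> I \<Longrightarrow> ((\<lambda>p. g i p * x powi p) has_sum s i) UNIV"
  shows "((\<lambda>p. (\<Sum>i\<in>I. a i * g i p) * x powi p) has_sum (\<Sum>i\<in>I. a i * s i)) UNIV"
proof -
  have "((\<lambda>p. \<Sum>i\<in>I. a i * (g i p * x powi p)) has_sum (\<Sum>i\<in>I. a i * s i)) UNIV"
    by (rule hs_finsum[where I=I and f="\<lambda>i p. a i * (g i p * x powi p)" and s="\<lambda>i. a i * s i"]) (use assms in \<open>auto intro: has_sum_cmult_right\<close>)
  then show ?thesis by (simp add: sum_distrib_right mult.assoc)
qed

definition fc :: "complex \<Rightarrow> nat \<Rightarrow> nat \<Rightarrow> (int \<Rightarrow> complex) \<Rightarrow> bool" where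
  "fc z M N c \<longleftrightarrow> utr c \<and> (\<forall>k<0. Op z M N c k = 0)"

definition gI :: "complex \<Rightarrow> nat \<Rightarrow> nat \<Rightarrow> int \<Rightarrow> int \<Rightarrow> complex" where
  "gI z M N k = (SOME c. (\<forall>p > k - int M - int N. c p = 0) \<and> (\<forall>x. norm z < norm x \<longrightarrow>
     ((\<lambda>p. c p * x powi p) has_sum (x powi k / (x^M * (x - z)^N))) UNIV))"

definition gR :: "complex \<Rightarrow> nat \<Rightarrow> nat \<Rightarrow> int \<Rightarrow> int \<Rightarrow> complex" where
  "gR z M N k = (SOME d. (\<forall>p < k - int M. d p = 0) \<and> (\<forall>x. 0 < norm x \<and> norm x < norm z \<longrightarrow>
     ((\<lambda>p. d p * x powi p) has_sum (x powi k / (x^M * (x - z)^N))) UNIV))"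

definition gL :: "complex \<Rightarrow> nat \<Rightarrow> nat \<Rightarrow> int \<Rightarrow> int \<Rightarrow> complex" where
  "gL z M N k = (SOME d. (\<forall>p < - int N. d p = 0) \<and> (\<forall>y. 0 < norm y \<and> norm y < norm z \<longrightarrow>
     ((\<lambda>p. d p * y powi p) has_sum ((y + z) powi k / ((y + z)^M * y^N))) UNIV))"

lemma gI: assumes "z \<noteq> 0" shows " (\<forall>p > k - int M - int N. gI z M N k p = 0) \<and> (\<forall>x. norm z < norm x \<longrightarrow>
     ((\<lambda>p. gI z M N k p * x powi p) has_sum (x powi k / (x^M * (x - z)^N))) UNIV)"
  unfolding gI_def by (rule someI_ex[OF gI_ex[OF assms]])

lemma gR: assumes "z \<noteq> 0" shows " (\<forall>p < k - int M. gR z M N k p = 0) \<and> (\<forall>x. 0 < norm x \<and> norm x < norm z \<longrightarrow>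
     ((\<lambda>p. gR z M N k p * x powi p) has_sum (x powi k / (x^M * (x - z)^N))) UNIV)"
  unfolding gR_def by (rule someI_ex[OF gR_ex[OF assms]])

lemma gL: assumes "z \<noteq> 0" shows " (\<forall>p < - int N. gL z M N k p = 0) \<and> (\<forall>y. 0 < norm y \<and> norm y < norm z \<longrightarrow>
     ((\<lambda>p. gL z M N k p * y powi p) has_sum ((y + z) powi k / ((y + z)^M * y^N))) UNIV)"
  unfolding gL_def by (rule someI_ex[OF gL_ex[OF assms]])

definition opoly :: "complex \<Rightarrow> nat \<Rightarrow> nat \<Rightarrow> (int \<Rightarrow> complex) \<Rightarrow> int \<Rightarrow> complex poly" where
  "opoly z M N c B = (\<Sum>k\<in>{0..B}. monom (Op z M N c k) (nat k))"

lemma poly_opoly: "poly (opoly z M N c B) x = (\<Sum>k\<in>{0..B}. Op z M N c k * x powi k)"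
  unfolding opoly_def poly_sum poly_monom
  by (rule sum.cong) (auto simp: power_int_def)

lemma Op_scale: "Op z M N (\<lambda>p. a * f p) k = a * Op z M N f k"
  using Op_lin[of z M N a f 0 f k] by simp

lemma utr_zero[simp]: "utr (\<lambda>_. 0)" by (simp add: utr_def)

lemma utr_sum: "finite I \<Longrightarrow> (\<forall>i\<in>I. utr (f i)) \<Longrightarrow> utr (\<lambda>p. \<Sum>i\<in>I. f i p)"
proof (induction I rule: finite_induct)
  case empty then show ?case by (simp add: utr_def)
next
  case (insert i I)
  then obtain P1 P2 where "\<forall>p>P1. f i p = 0" "\<forall>p>P2. (\<Sum>i\<in>I. f i p) = 0" by (auto simp: utr_def)
  then show ?case using insert by (auto simp: utr_def intro!: exI[of _ "max P1 P2"])
qed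

lemma utr_lin: "utr f \<Longrightarrow> utr g \<Longrightarrow> utr (\<lambda>p. a * f p + b * g p)"
proof -
  assume "utr f" "utr g"
  then obtain P1 P2 where "\<forall>p>P1. f p = 0" "\<forall>p>P2. g p = 0" by (auto simp: utr_def)
  then show ?thesis by (auto simp: utr_def intro!: exI[of _ "max P1 P2"])
qed

lemma fc_cls:
  fixes c :: "int \<Rightarrow> complex"
  assumes z: "z \<noteq> 0" and f: "fc z M N c" and B: "\<forall>k>B. Op z M N c k = 0"
  shows "\<forall>x. norm z < norm x \<longrightarrow> ((\<lambda>p. c p * x powi p) has_sum (poly (opoly z M N c B) x / (x^M*(x-z)^N))) UNIV"
proof -
  define c' where "c' p = (\<Sum>k\<in>{0..B}. Op z M N c k * gI z M N k p)" for p
  have hc': "((\<lambda>p. c' p * x powi p) has_sum (poly (opoly z M N c B) x / (x^M*(x-z)^N))) UNIV"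
    if x: "norm z < norm x" for x
  proof -
    have "((\<lambda>p. (\<Sum>k\<in>{0..B}. Op z M N c k * gI z M N k p) * x powi p) has_sum
        (\<Sum>k\<in>{0..B}. Op z M N c k * (x powi k / (x^M * (x - z)^N)))) UNIV"
      by (rule hs_finsum_scaled) (use gI[OF z] x in blast)+
    then show ?thesis
      by (simp add: c'_def poly_opoly sum_divide_distrib)
  qed
  have gIut: "utr (gI z M N k)" for k
    using gI[OF z, of k M N] unfolding utr_def by blast
  have ut': "utr c'"
    unfolding c'_def by (rule utr_sum) (auto intro!: utr_lin[of _ "\<lambda>_. 0" _ 0, simplified] gIut)
  have Opg: "Op z M N (gI z M N k) j = (if j = k then 1 else 0)" if k: "0 \<le> k" for k j
  proof -
    have "\<forall>x. norm z < norm x \<longrightarrow> ((\<lambda>p. gI z M N k p * x powi p) has_sum (poly (monom 1 (nat k)) x / (x^M*(x-z)^N))) UNIV"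
      using gI[OF z, of k M N] k by (simp add: poly_monom power_int_def)
    then have "Op z M N (gI z M N k) = pcoef (monom 1 (nat k))"
      by (rule cls_coef[OF z gIut])
    then show ?thesis using k by (auto simp: pcoef_def coeff_monom)
  qed
  have "Op z M N c' j = Op z M N c j" for j
  proof -
    have "Op z M N c' j = (\<Sum>k\<in>{0..B}. Op z M N c k * Op z M N (gI z M N k) j)"
      unfolding c'_def by (simp add: Op_sum Op_scale)
    also have "\<dots> = (\<Sum>k\<in>{0..B}. if k = j then Op z M N c j else 0)"
      by (rule sum.cong) (auto simp: Opg)
    also have "\<dots> = Op z M N c j"
      using f B by (auto simp: fc_def not_le)
    finally show ?thesis .
  qed
  then have "\<forall>k. Op z M N (\<lambda>p. c p - c' p) k = 0" by (simp add: Op_diff)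
  moreover have "utr (\<lambda>p. c p - c' p)"
    using utr_lin[of c c' 1 "-1"] f ut' by (simp add: fc_def)
  ultimately have "(\<lambda>p. c p - c' p) = (\<lambda>_. 0)" by (intro Op_inj) auto
  then have "c = c'" by (auto simp: fun_eq_iff dest: fun_cong)
  then show ?thesis using hc' by simp
qed

lemma Op_bound: "utr c \<Longrightarrow> \<exists>B\<ge>0. \<forall>k>B. Op z M N c k = 0"
proof -
  assume "utr c"
  then obtain B where "\<forall>k>B. Op z M N c k = 0" using utr_Op unfolding utr_def by blast
  then show ?thesis by (intro exI[of _ "max B 0"]) auto
qed

lemma expR_formula:
  assumes z: "z \<noteq> 0" and f: "fc z M N c"
  shows "expR z c n = (\<Sum>k\<in>{0..n + int M}. Op z M N c k * gR z M N k n)"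
proof -
  obtain B where B: "\<forall>k>B. Op z M N c k = 0" using Op_bound f unfolding fc_def by blast
  define d where "d n' = (\<Sum>k\<in>{0..B}. Op z M N c k * gR z M N k n')" for n'
  have "expR z c = d"
  proof (rule expR_char[OF z fc_cls[OF z f B]])
    show "\<forall>k < - int M. d k = 0"
      using gR[OF z] by (auto simp: d_def intro!: sum.neutral)
    show "\<forall>x. 0 < norm x \<and> norm x < norm z \<longrightarrow>
      ((\<lambda>p. d p * x powi p) has_sum (poly (opoly z M N c B) x / (x^M * (x-z)^N))) UNIV"
    proof (intro allI impI)
      fix x :: complex assume x: "0 < norm x \<and> norm x < norm z"
      have "((\<lambda>p. (\<Sum>k\<in>{0..B}. Op z M N c k * gR z M N k p) * x powi p) has_sum
          (\<Sum>k\<in>{0..B}. Op z M N c k * (x powi k / (x^M * (x - z)^N)))) UNIV"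
        by (rule hs_finsum_scaled) (use gR[OF z] x in blast)+
      then show "((\<lambda>p. d p * x powi p) has_sum (poly (opoly z M N c B) x / (x^M * (x-z)^N))) UNIV"
        by (simp add: d_def poly_opoly sum_divide_distrib)
    qed
  qed
  then have "expR z c n = (\<Sum>k\<in>{0..B}. Op z M N c k * gR z M N k n)" by (simp add: d_def)
  also have "\<dots> = (\<Sum>k\<in>{0..max B (n + int M)}. Op z M N c k * gR z M N k n)"
    by (rule sum.mono_neutral_left) (use B in auto)
  also have "\<dots> = (\<Sum>k\<in>{0..n + int M}. Op z M N c k * gR z M N k n)"
    by (rule sum.mono_neutral_right) (use gR[OF z] in auto)
  finally show ?thesis .
qed

lemma expL_formula:
  assumes z: "z \<noteq> 0" and f: "fc z M N c" and B: "\<forall>k>B. Op z M N c k = 0"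
  shows "expL z c m = (\<Sum>k\<in>{0..B}. Op z M N c k * gL z M N k m)"
proof -
  define d where "d n' = (\<Sum>k\<in>{0..B}. Op z M N c k * gL z M N k n')" for n'
  have "expL z c = d"
  proof (rule expL_char[OF z fc_cls[OF z f B]])
    show "\<forall>k < - int N. d k = 0"
      using gL[OF z] by (auto simp: d_def intro!: sum.neutral)
    show "\<forall>y. 0 < norm y \<and> norm y < norm z \<longrightarrow>
      ((\<lambda>p. d p * y powi p) has_sum (poly (opoly z M N c B) (y + z) / ((y + z)^M * y^N))) UNIV"
    proof (intro allI impI)
      fix y :: complex assume y: "0 < norm y \<and> norm y < norm z"
      have "((\<lambda>p. (\<Sum>k\<in>{0..B}. Op z M N c k * gL z M N k p) * y powi p) has_sum
          (\<Sum>k\<in>{0..B}. Op z M N c k * ((y + z) powi k / ((y + z)^M * y^N)))) UNIV"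
        by (rule hs_finsum_scaled) (use gL[OF z] y in blast)+
      then show "((\<lambda>p. d p * y powi p) has_sum (poly (opoly z M N c B) (y + z) / ((y + z)^M * y^N))) UNIV"
        by (simp add: d_def poly_opoly sum_divide_distrib)
    qed
  qed
  then show ?thesis by (simp add: d_def)
qed



lemma utr_sx: "utr c \<Longrightarrow> utr (sx c)"
proof -
  assume "utr c"
  then obtain P0 where "\<forall>p>P0. c p = 0" by (auto simp: utr_def)
  then have "\<forall>p>P0 + 1. sx c p = 0" by (simp add: sx_def)
  then show ?thesis by (auto simp: utr_def)
qed

lemma fc_lin: "fc z M N c1 \<Longrightarrow> fc z M N c2 \<Longrightarrow> fc z M N (\<lambda>p. a * c1 p + b * c2 p)"
  unfolding fc_def by (auto simp: Op_lin intro: utr_lin)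

lemma fc_zero[simp]: "fc z M N (\<lambda>_. 0)"
  unfolding fc_def by simp

lemma fc_sx: "fc z M N c \<Longrightarrow> fc z M N (sx c)"
  unfolding fc_def by (auto simp: Op_sx utr_sx) (auto simp: sx_def)

lemma fc_SucM: "fc z M N c \<Longrightarrow> fc z (Suc M) N c"
  unfolding fc_def by (auto simp: Op_SucM sx_def)

lemma fc_SucN: "fc z M N c \<Longrightarrow> fc z M (Suc N) c"
  unfolding fc_def by (auto simp: Dz_def)

lemma fc_mono: "M \<le> M' \<Longrightarrow> N \<le> N' \<Longrightarrow> fc z M N c \<Longrightarrow> fc z M' N' c"
proof -
  assume a: "M \<le> M'" "N \<le> N'" "fc z M N c"
  have "fc z (M + i) N c" for i by (induction i) (use a fc_SucM in auto)
  then have b: "fc z M' N c" using a by (metis le_add_diff_inverse)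
  have "fc z M' (N + j) c" for j by (induction j) (use b fc_SucN in auto)
  then show ?thesis using a by (metis le_add_diff_inverse)
qed

lemma fc_divx: "utr c \<Longrightarrow> fc z M N (sx c) \<Longrightarrow> fc z (Suc M) N c"
  unfolding fc_def by (auto simp: Op_SucM Op_sx[symmetric])

lemma fc_divDz: "utr c \<Longrightarrow> fc z M N (Dz z c) \<Longrightarrow> fc z M (Suc N) c"
  unfolding fc_def by (auto simp: Op_Dz[symmetric])

definition cls :: "complex \<Rightarrow> (int \<Rightarrow> complex) \<Rightarrow> bool" where
  "cls z c \<longleftrightarrow> (\<exists>M N. fc z M N c)"

lemma cls_lin: "cls z c1 \<Longrightarrow> cls z c2 \<Longrightarrow> cls z (\<lambda>p. a * c1 p + b * c2 p)"
proof -
  assume "cls z c1" "cls z c2"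
  then obtain M1 N1 M2 N2 where "fc z M1 N1 c1" "fc z M2 N2 c2" by (auto simp: cls_def)
  then have "fc z (max M1 M2) (max N1 N2) c1" "fc z (max M1 M2) (max N1 N2) c2"
    by (meson fc_mono max.cobounded1 max.cobounded2)+
  then show ?thesis unfolding cls_def by (blast intro: fc_lin)
qed

lemma cls_common: "cls z c1 \<Longrightarrow> cls z c2 \<Longrightarrow> \<exists>M N. fc z M N c1 \<and> fc z M N c2"
proof -
  assume "cls z c1" "cls z c2"
  then obtain M1 N1 M2 N2 where "fc z M1 N1 c1" "fc z M2 N2 c2" by (auto simp: cls_def)
  then have "fc z (max M1 M2) (max N1 N2) c1" "fc z (max M1 M2) (max N1 N2) c2"
    by (meson fc_mono max.cobounded1 max.cobounded2)+
  then show ?thesis by blast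
qed

lemma cls_zero[simp]: "cls z (\<lambda>_. 0)"
  unfolding cls_def by auto

lemma cls_sx: "cls z c \<Longrightarrow> cls z (sx c)"
  unfolding cls_def by (auto intro: fc_sx)

lemma cls_divx: "utr c \<Longrightarrow> cls z (sx c) \<Longrightarrow> cls z c"
  unfolding cls_def by (auto intro: fc_divx)

lemma cls_divDz: "utr c \<Longrightarrow> cls z (Dz z c) \<Longrightarrow> cls z c"
  unfolding cls_def by (auto intro: fc_divDz)



lemma gR_shift:
  assumes z: "z \<noteq> 0"
  shows "gR z M N (k + 1) n = gR z M N k (n - 1)"
proof -
  have "(\<lambda>n. gR z M N (k + 1) n - gR z M N k (n - 1)) = (\<lambda>_. 0)"
  proof (rule lt_unique[of "k - int M" _ "norm z"])
    show "\<forall>n<k - int M. gR z M N (k + 1) n - gR z M N k (n - 1) = 0"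
      using gR[OF z, of "k+1" M N] gR[OF z, of k M N] by auto
    show "norm z > 0" using z by simp
    show "\<forall>x. 0 < norm x \<and> norm x < norm z \<longrightarrow>
      ((\<lambda>p. (gR z M N (k + 1) p - gR z M N k (p - 1)) * x powi p) has_sum 0) UNIV"
    proof (intro allI impI)
      fix x :: complex assume x: "0 < norm x \<and> norm x < norm z"
      then have x0: "x \<noteq> 0" by auto
      have a: "((\<lambda>p. gR z M N (k + 1) p * x powi p) has_sum (x powi (k+1) / (x^M * (x - z)^N))) UNIV"
        using gR[OF z, of "k+1" M N] x by blast
      have pk: "x powi (k + 1) = x * x powi k" using x0 by (simp add: power_int_add)
      have b: "((\<lambda>p. gR z M N k (p - 1) * x powi p) has_sum (x powi (k+1) / (x^M * (x - z)^N))) UNIV"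
        using hs_shift[OF x0, of "gR z M N k" "x powi k / (x^M * (x - z)^N)" 1] gR[OF z, of k M N] x
        unfolding pk by simp
      show "((\<lambda>p. (gR z M N (k + 1) p - gR z M N k (p - 1)) * x powi p) has_sum 0) UNIV"
        using hs_diff[OF a b] by (simp add: algebra_simps)
    qed
  qed
  then show ?thesis by (metis eq_iff_diff_eq_0)
qed

lemma gL_shift:
  assumes z: "z \<noteq> 0"
  shows "gL z M N (k + 1) m = gL z M N k (m - 1) + z * gL z M N k m"
proof -
  have "(\<lambda>m. gL z M N (k + 1) m - (gL z M N k (m - 1) + z * gL z M N k m)) = (\<lambda>_. 0)"
  proof (rule lt_unique[of "- int N" _ "norm z"])
    show "\<forall>m< - int N. gL z M N (k + 1) m - (gL z M N k (m - 1) + z * gL z M N k m) = 0"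
      using gL[OF z, where k="k+1" and M=M and N=N] gL[OF z, where k=k and M=M and N=N] by auto
    show "norm z > 0" using z by simp
    show "\<forall>y. 0 < norm y \<and> norm y < norm z \<longrightarrow>
      ((\<lambda>p. (gL z M N (k + 1) p - (gL z M N k (p - 1) + z * gL z M N k p)) * y powi p) has_sum 0) UNIV"
    proof (intro allI impI)
      fix y :: complex assume y: "0 < norm y \<and> norm y < norm z"
      then have y0: "y \<noteq> 0" by auto
      have yz: "y + z \<noteq> 0"
      proof
        assume "y + z = 0" then have "y = - z" by (simp add: add_eq_0_iff)
        then show False using y by simp
      qed
      define D where "D = (y + z)^M * y^N"
      have a: "((\<lambda>p. gL z M N (k + 1) p * y powi p) has_sum ((y + z) powi (k+1) / D)) UNIV"
        using gL[OF z, where k="k+1" and M=M and N=N] y unfolding D_def by blast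
      have g: "((\<lambda>p. gL z M N k p * y powi p) has_sum ((y + z) powi k / D)) UNIV"
        using gL[OF z, where k=k and M=M and N=N] y unfolding D_def by blast
      have b1: "((\<lambda>p. gL z M N k (p - 1) * y powi p) has_sum (y powi 1 * ((y + z) powi k / D))) UNIV"
        by (rule hs_shift[OF y0 g])
      have b2: "((\<lambda>p. z * (gL z M N k p * y powi p)) has_sum (z * ((y + z) powi k / D))) UNIV"
        by (rule has_sum_cmult_right[OF g])
      have b: "((\<lambda>p. gL z M N k (p - 1) * y powi p + z * (gL z M N k p * y powi p)) has_sum
          (y powi 1 * ((y + z) powi k / D) + z * ((y + z) powi k / D))) UNIV"
        by (rule has_sum_add[OF b1 b2])
      have pk: "(y + z) powi (k + 1) = (y + z) * (y + z) powi k" using yz by (simp add: power_int_add)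
      have e: "y powi 1 * ((y + z) powi k / D) + z * ((y + z) powi k / D) = (y + z) powi (k+1) / D"
        unfolding pk by (simp add: add_divide_distrib ring_distribs)
      show "((\<lambda>p. (gL z M N (k + 1) p - (gL z M N k (p - 1) + z * gL z M N k p)) * y powi p) has_sum 0) UNIV"
        using hs_diff[OF a b] e by (simp add: algebra_simps)
    qed
  qed
  then show ?thesis by (metis eq_iff_diff_eq_0)
qed

lemma expR_lin:
  assumes z: "z \<noteq> 0" and f: "fc z M N c1" "fc z M N c2"
  shows "expR z (\<lambda>p. a * c1 p + b * c2 p) n = a * expR z c1 n + b * expR z c2 n"
  unfolding expR_formula[OF z f(1)] expR_formula[OF z f(2)] expR_formula[OF z fc_lin[OF f]]
  by (simp add: Op_lin sum.distrib sum_distrib_left algebra_simps)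

lemma expR_zero[simp]: "z \<noteq> 0 \<Longrightarrow> expR z (\<lambda>_. 0) n = 0"
  using expR_formula[of z 0 0 "\<lambda>_. 0" n] by simp

lemma expR_lt: "z \<noteq> 0 \<Longrightarrow> fc z M N c \<Longrightarrow> n < - int M \<Longrightarrow> expR z c n = 0"
  by (simp add: expR_formula)

lemma expR_sx:
  assumes z: "z \<noteq> 0" and f: "fc z M N c"
  shows "expR z (sx c) n = expR z c (n - 1)"
proof -
  have "expR z (sx c) n = (\<Sum>k\<in>{0..n + int M}. Op z M N c (k - 1) * gR z M N k n)"
    unfolding expR_formula[OF z fc_sx[OF f]] Op_sx by (simp add: sx_def)
  also have "\<dots> = (\<Sum>j\<in>{-1..n + int M - 1}. Op z M N c j * gR z M N (j + 1) n)"
    by (subst sum_shift_int) simp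
  also have "\<dots> = (\<Sum>j\<in>{-1..n + int M - 1}. Op z M N c j * gR z M N j (n - 1))"
    by (simp add: gR_shift[OF z])
  also have "\<dots> = (\<Sum>j\<in>{0..n - 1 + int M}. Op z M N c j * gR z M N j (n - 1))"
    by (rule sum.mono_neutral_right) (use f in \<open>auto simp: fc_def\<close>)
  also have "\<dots> = expR z c (n - 1)"
    by (simp add: expR_formula[OF z f])
  finally show ?thesis .
qed


lemma expL_lin:
  assumes z: "z \<noteq> 0" and f: "fc z M N c1" "fc z M N c2"
  shows "expL z (\<lambda>p. a * c1 p + b * c2 p) m = a * expL z c1 m + b * expL z c2 m"
proof -
  obtain B1 where B1: "\<forall>k>B1. Op z M N c1 k = 0" using Op_bound f(1) unfolding fc_def by blast
  obtain B2 where B2: "\<forall>k>B2. Op z M N c2 k = 0" using Op_bound f(2) unfolding fc_def by blast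
  define B where "B = max B1 B2"
  have b1: "\<forall>k>B. Op z M N c1 k = 0" "\<forall>k>B. Op z M N c2 k = 0" using B1 B2 by (auto simp: B_def)
  have b3: "\<forall>k>B. Op z M N (\<lambda>p. a * c1 p + b * c2 p) k = 0" using b1 by (simp add: Op_lin)
  show ?thesis
    unfolding expL_formula[OF z f(1) b1(1)] expL_formula[OF z f(2) b1(2)] expL_formula[OF z fc_lin[OF f] b3]
    by (simp add: Op_lin sum.distrib sum_distrib_left algebra_simps)
qed

lemma expL_zero[simp]: "z \<noteq> 0 \<Longrightarrow> expL z (\<lambda>_. 0) m = 0"
  using expL_formula[of z 0 0 "\<lambda>_. 0" 0 m] by simp

lemma expL_lt:
  assumes z: "z \<noteq> 0" and f: "fc z M N c" and m: "m < - int N"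
  shows "expL z c m = 0"
proof -
  obtain B where B: "\<forall>k>B. Op z M N c k = 0" using Op_bound f unfolding fc_def by blast
  show ?thesis unfolding expL_formula[OF z f B] using gL[OF z] m by simp
qed

lemma expL_sx:
  assumes z: "z \<noteq> 0" and f: "fc z M N c"
  shows "expL z (sx c) m = expL z c (m - 1) + z * expL z c m"
proof -
  obtain B where B0: "B \<ge> 0" and B: "\<forall>k>B. Op z M N c k = 0" using Op_bound f unfolding fc_def by blast
  have B': "\<forall>k>B + 1. Op z M N (sx c) k = 0" unfolding Op_sx using B by (simp add: sx_def)
  have "expL z (sx c) m = (\<Sum>k\<in>{0..B + 1}. Op z M N c (k - 1) * gL z M N k m)"
    unfolding expL_formula[OF z fc_sx[OF f] B'] Op_sx by (simp add: sx_def)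
  also have "\<dots> = (\<Sum>j\<in>{-1..B}. Op z M N c j * gL z M N (j + 1) m)"
    by (subst sum_shift_int) simp
  also have "\<dots> = (\<Sum>j\<in>{0..B}. Op z M N c j * gL z M N (j + 1) m)"
    by (rule sum.mono_neutral_right) (use f in \<open>auto simp: fc_def\<close>)
  also have "\<dots> = (\<Sum>j\<in>{0..B}. Op z M N c j * gL z M N j (m - 1)) + z * (\<Sum>j\<in>{0..B}. Op z M N c j * gL z M N j m)"
    by (simp add: gL_shift[OF z] sum.distrib sum_distrib_left algebra_simps)
  also have "\<dots> = expL z c (m - 1) + z * expL z c m"
    by (simp add: expL_formula[OF z f B])
  finally show ?thesis .
qed


lemma lcomb_sumform:
  assumes "finite K"
  shows "\<exists>xs. \<forall>c. (\<Sum>k\<in>K. Op z M N c k * g k) = lcomb xs c"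
  using assms
proof (induction K rule: finite_induct)
  case empty then show ?case by (intro exI[of _ "[]"]) simp
next
  case (insert k K)
  obtain xs where xs: "\<forall>c. (\<Sum>k\<in>K. Op z M N c k * g k) = lcomb xs c" using insert by blast
  obtain ys where ys: "\<forall>c. Op z M N c k = lcomb ys c" using Op_lcomb by blast
  show ?case
    by (rule exI[of _ "map (\<lambda>(a, i). (g k * a, i)) ys @ xs"]) (simp add: insert xs ys lcomb_scale)
qed

lemma expR_lcomb:
  assumes z: "z \<noteq> 0"
  shows "\<exists>xs. \<forall>c. fc z M N c \<longrightarrow> expR z c n = lcomb xs c"
proof -
  obtain xs where "\<forall>c. (\<Sum>k\<in>{0..n + int M}. Op z M N c k * gR z M N k n) = lcomb xs c"
    using lcomb_sumform[of "{0..n + int M}" z M N "\<lambda>k. gR z M N k n"] by auto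
  then show ?thesis using expR_formula[OF z] by metis
qed

lemma expL_lcomb:
  assumes z: "z \<noteq> 0"
  shows "\<exists>xs. \<forall>c. fc z M N c \<and> (\<forall>k>B. Op z M N c k = 0) \<longrightarrow> expL z c m = lcomb xs c"
proof -
  obtain xs where "\<forall>c. (\<Sum>k\<in>{0..B}. Op z M N c k * gL z M N k m) = lcomb xs c"
    using lcomb_sumform[of "{0..B}" z M N "\<lambda>k. gL z M N k m"] by auto
  then show ?thesis using expL_formula[OF z] by metis
qed

lemma lcomb_swap: "lcomb xs (\<lambda>q. lcomb ys (\<lambda>p. F p q)) = lcomb ys (\<lambda>p. lcomb xs (F p))"
proof (induction xs)
  case Nil then show ?case by simp
next
  case (Cons x xs)
  obtain a i where x: "x = (a, i)" by (cases x)
  have "lcomb ys (\<lambda>p. a * F p i + 1 * lcomb xs (F p)) = a * lcomb ys (\<lambda>p. F p i) + 1 * lcomb ys (\<lambda>p. lcomb xs (F p))"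
    by (rule lcomb_lin)
  then show ?case using Cons by (simp add: x)
qed

lemma fc_lcomb_cols: "(\<forall>q. fc z M N (\<lambda>p. F p q)) \<Longrightarrow> fc z M N (\<lambda>p. lcomb xs (F p))"
proof (induction xs)
  case Nil then show ?case by simp
next
  case (Cons x xs)
  obtain a i where x: "x = (a, i)" by (cases x)
  have "fc z M N (\<lambda>p. a * F p i + 1 * lcomb xs (F p))"
    by (rule fc_lin) (use Cons in auto)
  then show ?case by (simp add: x)
qed

lemma cls_lcomb_cols: "(\<forall>q. cls z (\<lambda>p. F p q)) \<Longrightarrow> cls z (\<lambda>p. lcomb xs (F p))"
proof (induction xs)
  case Nil then show ?case by simp
next
  case (Cons x xs)
  obtain a i where x: "x = (a, i)" by (cases x)
  have "cls z (\<lambda>p. a * F p i + 1 * lcomb xs (F p))"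
    by (rule cls_lin) (use Cons in auto)
  then show ?case by (simp add: x)
qed



lemma int_up_induct:
  fixes P :: "int \<Rightarrow> bool"
  assumes base: "\<And>n. n < lo \<Longrightarrow> P n" and step: "\<And>n. P (n - 1) \<Longrightarrow> P n"
  shows "P k"
proof -
  have kk: "P (lo - 1 + int j)" for j
  proof (induction j)
    case 0 then show ?case using base by simp
  next
    case (Suc j)
    then show ?case using step[of "lo - 1 + int (Suc j)"] by (simp add: algebra_simps)
  qed
  show ?thesis
  proof (cases "k < lo")
    case True then show ?thesis using base by simp
  next
    case False
    then have "k = lo - 1 + int (nat (k - lo + 1))" by simp
    then show ?thesis using kk by metis
  qed
qed

lemma dlemma:
  fixes F G :: "int \<Rightarrow> int \<Rightarrow> complex"
  assumes z: "z \<noteq> 0"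
   and F1: "\<forall>m n. n < nb \<longrightarrow> F m n = 0" and F2: "\<forall>n. \<exists>m0. \<forall>m<m0. F m n = 0"
   and G1: "\<forall>m n. m < mb \<longrightarrow> G m n = 0" and G2: "\<forall>m. \<exists>n0. \<forall>n<n0. G m n = 0"
   and rel: "\<forall>m n. (F (m-1) n - G (m-1) n) + z * (F m n - G m n) - (F m (n-1) - G m (n-1)) = 0"
  shows "F m n = G m n"
proof -
  define H where "H m n = F m n - G m n" for m n
  have rel': "H (m-1) n + z * H m n - H m (n-1) = 0" for m n using rel by (simp add: H_def)
  have zH: "H m n = 0" if "H (m-1) n = 0" "H m (n-1) = 0" for m n
    using rel'[of m n] that z by simp
  have S1: "\<forall>n<nb. H m n = 0" for m
  proof (rule int_up_induct[where lo=mb and P="\<lambda>m. \<forall>n<nb. H m n = 0"])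
    fix m :: int assume "m < mb" then show "\<forall>n<nb. H m n = 0" using F1 G1 by (simp add: H_def)
  next
    fix m :: int assume IH: "\<forall>n<nb. H (m - 1) n = 0"
    obtain n0 where n0: "\<forall>n<n0. G m n = 0" using G2 by blast
    have "n < nb \<longrightarrow> H m n = 0" for n
    proof (rule int_up_induct[where lo=n0 and P="\<lambda>n. n < nb \<longrightarrow> H m n = 0"])
      fix n :: int assume "n < n0" then show "n < nb \<longrightarrow> H m n = 0" using F1 n0 by (simp add: H_def)
    next
      fix n :: int assume "n - 1 < nb \<longrightarrow> H m (n - 1) = 0"
      then show "n < nb \<longrightarrow> H m n = 0" using zH[of m n] IH by simp
    qed
    then show "\<forall>n<nb. H m n = 0" by blast
  qed
  have S2: "\<forall>m<mb. H m n = 0" for n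
  proof (rule int_up_induct[where lo=nb and P="\<lambda>n. \<forall>m<mb. H m n = 0"])
    fix n :: int assume "n < nb" then show "\<forall>m<mb. H m n = 0" using S1 by blast
  next
    fix n :: int assume IH: "\<forall>m<mb. H m (n - 1) = 0"
    obtain m0 where m0: "\<forall>m<m0. F m n = 0" using F2 by blast
    have "m < mb \<longrightarrow> H m n = 0" for m
    proof (rule int_up_induct[where lo=m0 and P="\<lambda>m. m < mb \<longrightarrow> H m n = 0"])
      fix m :: int assume "m < m0" then show "m < mb \<longrightarrow> H m n = 0" using G1 m0 by (simp add: H_def)
    next
      fix m :: int assume "m - 1 < mb \<longrightarrow> H (m - 1) n = 0"
      then show "m < mb \<longrightarrow> H m n = 0" using zH[of m n] IH by simp
    qed
    then show "\<forall>m<mb. H m n = 0" by blast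
  qed
  have "\<forall>m. H m n = 0" for n
  proof (rule int_up_induct[where lo=nb and P="\<lambda>n. \<forall>m. H m n = 0"])
    fix n :: int assume "n < nb" then show "\<forall>m. H m n = 0" using S1 by blast
  next
    fix n :: int assume IH: "\<forall>m. H m (n - 1) = 0"
    have "H m n = 0" for m
    proof (rule int_up_induct[where lo=mb and P="\<lambda>m. H m n = 0"])
      fix m :: int assume "m < mb" then show "H m n = 0" using S2 by blast
    next
      fix m :: int assume "H (m - 1) n = 0" then show "H m n = 0" using zH[of m n] IH by simp
    qed
    then show "\<forall>m. H m n = 0" by blast
  qed
  then show ?thesis by (simp add: H_def)
qed



definition D12 :: "(int \<Rightarrow> int \<Rightarrow> complex) \<Rightarrow> int \<Rightarrow> int \<Rightarrow> complex" where
  "D12 F = (\<lambda>p q. F (p - 1) q - F p (q - 1))"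

lemma down_induct:
  assumes "P K" "\<And>j. j < K \<Longrightarrow> P (Suc j) \<Longrightarrow> P j" "j \<le> K"
  shows "P j"
proof -
  have "\<forall>j. K - d \<le> j \<and> j \<le> K \<longrightarrow> P j" for d
  proof (induction d)
    case 0 then show ?case using assms(1) by auto
  next
    case (Suc d)
    show ?case
    proof (intro allI impI)
      fix j assume j: "K - Suc d \<le> j \<and> j \<le> K"
      show "P j"
      proof (cases "K - d \<le> j")
        case True then show ?thesis using Suc j by auto
      next
        case False
        then have "j < K" "K - d \<le> Suc j" "Suc j \<le> K" using j by auto
        then show ?thesis using Suc assms(2) by auto
      qed
    qed
  qed
  then show ?thesis using assms(3) by (metis diff_diff_cancel le_refl)
qed

theorem abstract_comm:
  fixes A B :: "int \<Rightarrow> int \<Rightarrow> complex"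
  assumes z: "z \<noteq> 0"
    and Ar: "\<forall>p. fc z Mv Nv (A p)"
    and Az: "\<forall>p>P0. \<forall>q. A p q = 0"
    and Bc: "\<forall>q. fc z Mu Nu (\<lambda>p. B p q)"
    and Bz: "\<forall>q>Q0. \<forall>p. B p q = 0"
    and loc: "(D12 ^^ K) A = (D12 ^^ K) B"
  shows "expL z (\<lambda>p. expR z (A p) n) m = expR z (\<lambda>q. expL z (\<lambda>p. B p q) m) n"
proof -
  define Aj where "Aj j = (D12 ^^ j) A" for j
  define Bj where "Bj j = (D12 ^^ j) B" for j
  have AjS: "Aj (Suc j) p q = Aj j (p - 1) q - Aj j p (q - 1)" for j p q
    by (simp add: Aj_def D12_def)
  have BjS: "Bj (Suc j) p q = Bj j (p - 1) q - Bj j p (q - 1)" for j p q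
    by (simp add: Bj_def D12_def)
  have f1: "fc z Mv Nv (Aj j p)" for j p
  proof (induction j arbitrary: p)
    case 0 then show ?case using Ar by (simp add: Aj_def)
  next
    case (Suc j)
    have "fc z Mv Nv (\<lambda>q. 1 * Aj j (p - 1) q + (-1) * sx (Aj j p) q)"
      by (rule fc_lin) (use Suc fc_sx in auto)
    then show ?case by (simp add: AjS sx_def fun_eq_iff)
  qed
  have f2: "Aj j p q = 0" if "p > P0 + int j" for j p q
    using that
  proof (induction j arbitrary: p q)
    case 0 then show ?case using Az by (simp add: Aj_def)
  next
    case (Suc j) then show ?case by (simp add: AjS)
  qed
  have f3: "fc z Mu Nu (\<lambda>p. Bj j p q)" for j q
  proof (induction j arbitrary: q)
    case 0 then show ?case using Bc by (simp add: Bj_def)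
  next
    case (Suc j)
    have "fc z Mu Nu (\<lambda>p. 1 * sx (\<lambda>p. Bj j p q) p + (-1) * Bj j p (q - 1))"
      by (rule fc_lin) (use Suc fc_sx in auto)
    then show ?case by (simp add: BjS sx_def)
  qed
  have f4: "Bj j p q = 0" if "q > Q0 + int j" for j p q
    using that
  proof (induction j arbitrary: p q)
    case 0 then show ?case using Bz by (simp add: Bj_def)
  next
    case (Suc j) then show ?case by (simp add: BjS)
  qed
  have CAB: "Aj K = Bj K" using loc by (simp add: Aj_def Bj_def)
  define A' where "A' j p n = expR z (Aj j p) n" for j p n
  define L where "L j m n = expL z (\<lambda>p. A' j p n) m" for j m n
  define B' where "B' j m q = expL z (\<lambda>p. Bj j p q) m" for j m q
  define R where "R j m n = expR z (B' j m) n" for j m n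
  have f5: "A' (Suc j) p n = A' j (p - 1) n - A' j p (n - 1)" for j p n
  proof -
    have e: "Aj (Suc j) p = (\<lambda>q. 1 * Aj j (p - 1) q + (-1) * sx (Aj j p) q)"
      by (simp add: fun_eq_iff AjS sx_def)
    have "A' (Suc j) p n = expR z (\<lambda>q. 1 * Aj j (p - 1) q + (-1) * sx (Aj j p) q) n"
      unfolding A'_def e ..
    also have "\<dots> = 1 * expR z (Aj j (p - 1)) n + (-1) * expR z (sx (Aj j p)) n"
      by (rule expR_lin[OF z f1 fc_sx[OF f1]])
    also have "\<dots> = A' j (p - 1) n - A' j p (n - 1)"
      by (simp add: A'_def expR_sx[OF z f1])
    finally show ?thesis .
  qed
  have f6a: "A' j p n = 0" if "n < - int Mv" for j p n
    using expR_lt[OF z f1 that] by (simp add: A'_def)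
  have f6b: "A' j p n = 0" if "p > P0 + int j" for j p n
  proof -
    have "Aj j p = (\<lambda>_. 0)" using f2[OF that] by auto
    then show ?thesis by (simp add: A'_def z)
  qed
  have utrA': "utr (\<lambda>p. A' j p n)" for j n
    unfolding utr_def using f6b by blast
  have f7: "cls z (\<lambda>p. A' K p n)" for n
  proof -
    obtain xs where xs: "\<forall>c. fc z Mv Nv c \<longrightarrow> expR z c n = lcomb xs c"
      using expR_lcomb[OF z] by blast
    have "(\<lambda>p. A' K p n) = (\<lambda>p. lcomb xs (Aj K p))"
      using xs f1 by (simp add: A'_def)
    moreover have "cls z (\<lambda>p. lcomb xs (Aj K p))"
      by (rule cls_lcomb_cols) (use f3 CAB in \<open>auto simp: cls_def\<close>)
    ultimately show ?thesis by simp
  qed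
  have f8: "cls z (\<lambda>p. A' j p n)" if "j \<le> K" for j n
  proof -
    have "\<forall>n. cls z (\<lambda>p. A' j p n)"
    proof (rule down_induct[where P="\<lambda>j. \<forall>n. cls z (\<lambda>p. A' j p n)", OF _ _ that])
      show "\<forall>n. cls z (\<lambda>p. A' K p n)" using f7 by blast
    next
      fix j assume j: "j < K" and IH: "\<forall>n. cls z (\<lambda>p. A' (Suc j) p n)"
      show "\<forall>n. cls z (\<lambda>p. A' j p n)"
      proof
        fix n show "cls z (\<lambda>p. A' j p n)"
        proof (rule int_up_induct[where lo="- int Mv" and P="\<lambda>n. cls z (\<lambda>p. A' j p n)"])
          fix n :: int assume "n < - int Mv"
          then have "(\<lambda>p. A' j p n) = (\<lambda>_. 0)" using f6a by auto
          then show "cls z (\<lambda>p. A' j p n)" by simp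
        next
          fix n :: int assume IHn: "cls z (\<lambda>p. A' j p (n - 1))"
          have "cls z (\<lambda>p. 1 * A' (Suc j) p n + 1 * A' j p (n - 1))"
            by (rule cls_lin) (use IH IHn in auto)
          moreover have "sx (\<lambda>p. A' j p n) = (\<lambda>p. 1 * A' (Suc j) p n + 1 * A' j p (n - 1))"
            by (simp add: sx_def f5 fun_eq_iff)
          ultimately show "cls z (\<lambda>p. A' j p n)"
            using cls_divx[OF utrA'] by simp
        qed
      qed
    qed
    then show ?thesis by blast
  qed
  have f9: "L (Suc j) m n = L j (m - 1) n + z * L j m n - L j m (n - 1)" if "j < K" for j m n
  proof -
    have jK: "j \<le> K" using that by simp
    obtain M N where MN: "fc z M N (\<lambda>p. A' j p n)" "fc z M N (\<lambda>p. A' j p (n - 1))"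
      using cls_common[OF f8[OF jK] f8[OF jK]] by blast
    have "L (Suc j) m n = expL z (\<lambda>p. 1 * sx (\<lambda>p. A' j p n) p + (-1) * A' j p (n - 1)) m"
      by (simp add: L_def f5 sx_def)
    also have "\<dots> = 1 * expL z (sx (\<lambda>p. A' j p n)) m + (-1) * expL z (\<lambda>p. A' j p (n - 1)) m"
      by (rule expL_lin[OF z fc_sx[OF MN(1)] MN(2)])
    also have "\<dots> = L j (m - 1) n + z * L j m n - L j m (n - 1)"
      by (simp add: expL_sx[OF z MN(1)] L_def)
    finally show ?thesis .
  qed
  have f10a: "L j m n = 0" if "n < - int Mv" for j m n
  proof -
    have "(\<lambda>p. A' j p n) = (\<lambda>_. 0)" using f6a[OF that] by auto
    then show ?thesis by (simp add: L_def z)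
  qed
  have f10b: "\<exists>m0. \<forall>m<m0. L j m n = 0" if jK: "j \<le> K" for j n
  proof -
    obtain M N where "fc z M N (\<lambda>p. A' j p n)" using f8[OF jK, of n] unfolding cls_def by blast
    then have "\<forall>m < - int N. L j m n = 0" using expL_lt[OF z] by (auto simp: L_def)
    then show ?thesis by blast
  qed
  have f11: "B' (Suc j) m q = B' j (m - 1) q + z * B' j m q - B' j m (q - 1)" for j m q
  proof -
    have "B' (Suc j) m q = expL z (\<lambda>p. 1 * sx (\<lambda>p. Bj j p q) p + (-1) * Bj j p (q - 1)) m"
      by (simp add: B'_def BjS sx_def)
    also have "\<dots> = 1 * expL z (sx (\<lambda>p. Bj j p q)) m + (-1) * expL z (\<lambda>p. Bj j p (q - 1)) m"
      by (rule expL_lin[OF z fc_sx[OF f3] f3])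
    also have "\<dots> = B' j (m - 1) q + z * B' j m q - B' j m (q - 1)"
      by (simp add: expL_sx[OF z f3] B'_def)
    finally show ?thesis .
  qed
  have f12a: "B' j m q = 0" if "m < - int Nu" for j m q
    using expL_lt[OF z f3 that] by (simp add: B'_def)
  have f12b: "B' j m q = 0" if "q > Q0 + int j" for j m q
  proof -
    have "(\<lambda>p. Bj j p q) = (\<lambda>_. 0)" using f4[OF that] by auto
    then show ?thesis by (simp add: B'_def z)
  qed
  have utrB': "utr (B' j m)" for j m
    unfolding utr_def using f12b by blast
  have f13: "cls z (B' K m)" for m
  proof -
    have Cz: "\<forall>p>P0 + int K. Bj K p q = 0" for q using f2 CAB by metis
    have Ob: "\<forall>k>P0 + int K + int Mu + int Nu. Op z Mu Nu (\<lambda>p. Bj K p q) k = 0" for q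
      by (rule Op_utr[OF Cz])
    obtain xs where xs: "\<forall>c. fc z Mu Nu c \<and> (\<forall>k>P0 + int K + int Mu + int Nu. Op z Mu Nu c k = 0) \<longrightarrow> expL z c m = lcomb xs c"
      using expL_lcomb[OF z] by blast
    have "B' K m = (\<lambda>q. lcomb xs (\<lambda>p. Bj K p q))"
      using xs f3 Ob by (simp add: B'_def fun_eq_iff)
    moreover have "cls z (\<lambda>q. lcomb xs (\<lambda>p. Bj K p q))"
      by (rule cls_lcomb_cols[where F="\<lambda>q p. Bj K p q"]) (metis f1 CAB cls_def)
    ultimately show ?thesis by simp
  qed
  have f14: "cls z (B' j m)" if "j \<le> K" for j m
  proof -
    have "\<forall>m. cls z (B' j m)"
    proof (rule down_induct[where P="\<lambda>j. \<forall>m. cls z (B' j m)", OF _ _ that])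
      show "\<forall>m. cls z (B' K m)" using f13 by blast
    next
      fix j assume j: "j < K" and IH: "\<forall>m. cls z (B' (Suc j) m)"
      show "\<forall>m. cls z (B' j m)"
      proof
        fix m show "cls z (B' j m)"
        proof (rule int_up_induct[where lo="- int Nu" and P="\<lambda>m. cls z (B' j m)"])
          fix m :: int assume "m < - int Nu"
          then have "B' j m = (\<lambda>_. 0)" using f12a by auto
          then show "cls z (B' j m)" by simp
        next
          fix m :: int assume IHm: "cls z (B' j (m - 1))"
          have "cls z (\<lambda>q. 1 * B' j (m - 1) q + (-1) * B' (Suc j) m q)"
            by (rule cls_lin) (use IH IHm in auto)
          moreover have "Dz z (B' j m) = (\<lambda>q. 1 * B' j (m - 1) q + (-1) * B' (Suc j) m q)"
            by (simp add: Dz_def f11 fun_eq_iff)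
          ultimately show "cls z (B' j m)"
            using cls_divDz[OF utrB'] by simp
        qed
      qed
    qed
    then show ?thesis by blast
  qed
  have f15: "R (Suc j) m n = R j (m - 1) n + z * R j m n - R j m (n - 1)" if "j < K" for j m n
  proof -
    have jK: "j \<le> K" using that by simp
    obtain M N where MN: "fc z M N (B' j (m - 1))" "fc z M N (B' j m)"
      using cls_common[OF f14[OF jK] f14[OF jK]] by blast
    have e: "B' (Suc j) m = (\<lambda>q. 1 * (\<lambda>q. 1 * B' j (m - 1) q + z * B' j m q) q + (-1) * sx (B' j m) q)"
      by (simp add: fun_eq_iff f11 sx_def)
    have "R (Suc j) m n = expR z (\<lambda>q. 1 * (\<lambda>q. 1 * B' j (m - 1) q + z * B' j m q) q + (-1) * sx (B' j m) q) n"
      unfolding R_def e ..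
    also have "\<dots> = 1 * expR z (\<lambda>q. 1 * B' j (m - 1) q + z * B' j m q) n + (-1) * expR z (sx (B' j m)) n"
      by (rule expR_lin[OF z fc_lin[OF MN] fc_sx[OF MN(2)]])
    also have "\<dots> = R j (m - 1) n + z * R j m n - R j m (n - 1)"
      using expR_lin[OF z MN, of 1 z n] by (simp add: expR_sx[OF z MN(2)] R_def)
    finally show ?thesis .
  qed
  have f16a: "R j m n = 0" if "m < - int Nu" for j m n
  proof -
    have "B' j m = (\<lambda>_. 0)" using f12a[OF that] by auto
    then show ?thesis by (simp add: R_def z)
  qed
  have f16b: "\<exists>n0. \<forall>n<n0. R j m n = 0" if jK: "j \<le> K" for j m
  proof -
    obtain M N where "fc z M N (B' j m)" using f14[OF jK, of m] unfolding cls_def by blast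
    then have "\<forall>n < - int M. R j m n = 0" using expR_lt[OF z] by (auto simp: R_def)
    then show ?thesis by blast
  qed
  have f17: "L K m n = R K m n" for m n
  proof -
    define C where "C = Aj K"
    have Cr: "fc z Mv Nv (C p)" for p using f1 by (simp add: C_def)
    have Cc: "fc z Mu Nu (\<lambda>p. C p q)" for q using f3 CAB by (simp add: C_def)
    have Cz: "\<forall>p>P0 + int K. C p q = 0" for q using f2 by (simp add: C_def)
    obtain xsR where xsR: "\<forall>c. fc z Mv Nv c \<longrightarrow> expR z c n = lcomb xsR c"
      using expR_lcomb[OF z] by blast
    obtain xsL where xsL: "\<forall>c. fc z Mu Nu c \<and> (\<forall>k>P0 + int K + int Mu + int Nu. Op z Mu Nu c k = 0) \<longrightarrow> expL z c m = lcomb xsL c"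
      using expL_lcomb[OF z] by blast
    have "L K m n = expL z (\<lambda>p. lcomb xsR (C p)) m"
      using xsR Cr by (simp add: L_def A'_def C_def)
    also have "\<dots> = lcomb xsL (\<lambda>p. lcomb xsR (C p))"
    proof -
      have fcc: "fc z Mu Nu (\<lambda>p. lcomb xsR (C p))" by (rule fc_lcomb_cols) (use Cc in auto)
      have "\<forall>p>P0 + int K. lcomb xsR (C p) = 0"
      proof (intro allI impI)
        fix p assume "p > P0 + int K"
        then have "C p = (\<lambda>_. 0)" using Cz by auto
        then show "lcomb xsR (C p) = 0" by simp
      qed
      then have "\<forall>k>P0 + int K + int Mu + int Nu. Op z Mu Nu (\<lambda>p. lcomb xsR (C p)) k = 0"
        by (rule Op_utr)
      then show ?thesis using xsL fcc by blast
    qed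
    also have "\<dots> = lcomb xsR (\<lambda>q. lcomb xsL (\<lambda>p. C p q))"
      by (rule lcomb_swap[symmetric])
    also have "\<dots> = expR z (\<lambda>q. lcomb xsL (\<lambda>p. C p q)) n"
    proof -
      have "fc z Mv Nv (\<lambda>q. lcomb xsL (\<lambda>p. C p q))"
        by (rule fc_lcomb_cols[where F="\<lambda>q p. C p q"]) (use Cr in auto)
      then show ?thesis using xsR by simp
    qed
    also have "\<dots> = R K m n"
    proof -
      have "B' K m = (\<lambda>q. lcomb xsL (\<lambda>p. C p q))"
      proof
        fix q
        have "\<forall>k>P0 + int K + int Mu + int Nu. Op z Mu Nu (\<lambda>p. C p q) k = 0"
          by (rule Op_utr[OF Cz])
        then show "B' K m q = lcomb xsL (\<lambda>p. C p q)"
          using xsL Cc by (simp add: B'_def C_def CAB)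
      qed
      then show ?thesis by (simp add: R_def)
    qed
    finally show ?thesis .
  qed
  have f18: "\<forall>m n. L j m n = R j m n" if "j \<le> K" for j
  proof (rule down_induct[where P="\<lambda>j. \<forall>m n. L j m n = R j m n", OF _ _ that])
    show "\<forall>m n. L K m n = R K m n" using f17 by blast
  next
    fix j assume j: "j < K" and IH: "\<forall>m n. L (Suc j) m n = R (Suc j) m n"
    show "\<forall>m n. L j m n = R j m n"
    proof (intro allI)
      fix m n
      show "L j m n = R j m n"
      proof (rule dlemma[OF z, where nb="- int Mv" and mb="- int Nu"])
        show "\<forall>m n. n < - int Mv \<longrightarrow> L j m n = 0" using f10a by blast
        show "\<forall>n. \<exists>m0. \<forall>m<m0. L j m n = 0" using f10b j by simp
        show "\<forall>m n. m < - int Nu \<longrightarrow> R j m n = 0" using f16a by blast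
        show "\<forall>m. \<exists>n0. \<forall>n<n0. R j m n = 0" using f16b j by simp
        show "\<forall>m n. L j (m - 1) n - R j (m - 1) n + z * (L j m n - R j m n) - (L j m (n - 1) - R j m (n - 1)) = 0"
          using f9[OF j] f15[OF j] IH by (simp add: algebra_simps)
      qed
    qed
  qed
  have "L 0 m n = R 0 m n" using f18 by blast
  moreover have "B' 0 m = (\<lambda>q. expL z (\<lambda>p. B p q) m)" by (simp add: fun_eq_iff B'_def Bj_def)
  ultimately show ?thesis by (simp add: L_def A'_def R_def Aj_def)
qed



definition DK :: "nat \<Rightarrow> (int \<Rightarrow> int \<Rightarrow> complex) \<Rightarrow> int \<Rightarrow> int \<Rightarrow> complex" where
  "DK K F p q = (\<Sum>k\<le>K. of_nat (K choose k) * (-1)^k * F (p - int (K - k)) (q - int k))"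

lemma choose_Suc_split: "(Suc K choose k) = (K choose k) + (if k = 0 then 0 else K choose (k - 1))"
  by (cases k) auto

lemma DK_Suc: "DK (Suc K) F p q = DK K F (p - 1) q - DK K F p (q - 1)"
proof -
  have "DK (Suc K) F p q = (\<Sum>k\<le>Suc K. of_nat (K choose k) * (-1)^k * F (p - int (Suc K - k)) (q - int k))
      + (\<Sum>k\<le>Suc K. of_nat (if k = 0 then 0 else K choose (k - 1)) * (-1)^k * F (p - int (Suc K - k)) (q - int k))"
    unfolding DK_def choose_Suc_split by (simp add: sum.distrib algebra_simps)
  also have "(\<Sum>k\<le>Suc K. of_nat (K choose k) * (-1)^k * F (p - int (Suc K - k)) (q - int k)) = DK K F (p - 1) q"
  proof -
    have "(\<Sum>k\<le>Suc K. of_nat (K choose k) * (-1)^k * F (p - int (Suc K - k)) (q - int k))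
        = (\<Sum>k\<le>K. of_nat (K choose k) * (-1)^k * F (p - int (Suc K - k)) (q - int k))"
      by (simp add: sum.atMost_Suc)
    also have "\<dots> = DK K F (p - 1) q"
      unfolding DK_def by (rule sum.cong) (auto simp: of_nat_diff algebra_simps)
    finally show ?thesis .
  qed
  also have "(\<Sum>k\<le>Suc K. of_nat (if k = 0 then 0 else K choose (k - 1)) * (-1)^k * F (p - int (Suc K - k)) (q - int k))
      = - DK K F p (q - 1)"
  proof -
    have "(\<Sum>k\<le>Suc K. of_nat (if k = 0 then 0 else K choose (k - 1)) * (-1)^k * F (p - int (Suc K - k)) (q - int k))
       = (\<Sum>k\<le>K. of_nat (K choose k) * (-1)^(Suc k) * F (p - int (K - k)) (q - int (Suc k)))"
      by (subst sum.atMost_Suc_shift) simp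
    also have "\<dots> = - DK K F p (q - 1)"
      unfolding DK_def by (simp add: sum_negf[symmetric] algebra_simps)
    finally show ?thesis .
  qed
  finally show ?thesis by simp
qed


lemma D12_pow: "(D12 ^^ K) F = DK K F"
proof (induction K)
  case 0 then show ?case by (simp add: DK_def fun_eq_iff)
next
  case (Suc K) then show ?case by (simp add: D12_def DK_Suc fun_eq_iff)
qed

lemma sum_atMost_reflect: "(\<Sum>i\<le>K. f i) = (\<Sum>i\<le>(K::nat). f (K - i))"
  by (rule sum.reindex_bij_witness[of _ "\<lambda>i. K - i" "\<lambda>i. K - i"]) auto

lemma lin_add: "Vector_Spaces.linear s1 s2 f \<Longrightarrow> f (a + b) = f a + f b"
  using linear_iff_module_hom module_hom.add by metis
lemma lin_scale: "Vector_Spaces.linear s1 s2 f \<Longrightarrow> f (s1 r x) = s2 r (f x)"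
  using linear_iff_module_hom module_hom.scale by metis
lemma lin_zero: "Vector_Spaces.linear s1 s2 f \<Longrightarrow> f 0 = 0"
  using linear_iff_module_hom module_hom.zero by metis
lemma lin_diff: "Vector_Spaces.linear s1 s2 f \<Longrightarrow> f (a - b) = f a - f b"
  using linear_iff_module_hom module_hom.diff by metis
lemma lin_sum: "Vector_Spaces.linear s1 s2 f \<Longrightarrow> f (sum g S) = (\<Sum>a\<in>S. f (g a))"
  using linear_iff_module_hom module_hom.sum by metis

lemma vs_module: "vector_space s \<Longrightarrow> module s"
  by (simp add: module_iff_vector_space)

lemma vs_scale0: "vector_space s \<Longrightarrow> s a 0 = 0"
  by (rule module.scale_zero_right[OF vs_module])
lemma vs_0scale: "vector_space s \<Longrightarrow> s 0 x = 0"
  by (rule module.scale_zero_left[OF vs_module])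
lemma vs_scale_sum: "vector_space s \<Longrightarrow> s a (sum f A) = (\<Sum>x\<in>A. s a (f x))"
  by (rule module.scale_sum_right[OF vs_module])
lemma vs_scale_diff: "vector_space s \<Longrightarrow> s a (x - y) = s a x - s a y"
  by (rule module.scale_right_diff_distrib[OF vs_module])
lemma vs_scale_ldiff: "vector_space s \<Longrightarrow> s (a - b) x = s a x - s b x"
  by (rule module.scale_left_diff_distrib[OF vs_module])
lemma vs_scale_ladd: "vector_space s \<Longrightarrow> s (a + b) x = s a x + s b x"
  by (rule module.scale_left_distrib[OF vs_module])
lemma vs_scale_radd: "vector_space s \<Longrightarrow> s a (x + y) = s a x + s a y"
  by (rule module.scale_right_distrib[OF vs_module])
lemma vs_scale_scale: "vector_space s \<Longrightarrow> s a (s b x) = s (a * b) x"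
  by (rule module.scale_scale[OF vs_module])
lemma vs_scale_one: "vector_space s \<Longrightarrow> s 1 x = x"
  by (rule module.scale_one[OF vs_module])
lemma vs_scale_eq0: "vector_space s \<Longrightarrow> s a x = 0 \<longleftrightarrow> a = 0 \<or> x = 0"
  by (rule vector_space.scale_eq_0_iff)

lemma loc_pair:
  fixes sV :: "complex \<Rightarrow> 'v::ab_group_add \<Rightarrow> 'v" and sW :: "complex \<Rightarrow> 'w::ab_group_add \<Rightarrow> 'w"
  assumes VS: "vector_space sW"
    and linu: "\<forall>n w. Vector_Spaces.linear sV sW (\<lambda>u. YW u n w)"
    and jac: "jacobi_identity sW Y YW"
    and al: "Vector_Spaces.linear sW (*) \<alpha>"
    and tr: "\<forall>i::nat. Y a (int K + int i) b = 0"
  shows "DK K (\<lambda>p q. \<alpha> (YW a p (YW b q w))) p q = DK K (\<lambda>p q. \<alpha> (YW b q (YW a p w))) p q"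
proof -
  define m where "m = p - int K"
  define n where "n = q - int K"
  have J: "Sum_any (\<lambda>i::nat. sW ((of_int m :: complex) gchoose i) (YW (Y a (int K + int i) b) (m + n - int i) w))
      = Sum_any (\<lambda>i::nat. sW ((-1) ^ i * ((of_int (int K) :: complex) gchoose i))
                  (YW a (int K + m - int i) (YW b (n + int i) w)
                   - sW ((-1::complex) powi (int K)) (YW b (int K + n - int i) (YW a (m + int i) w))))"
    using jac unfolding jacobi_identity_def by blast
  have "Sum_any (\<lambda>i::nat. sW ((of_int m :: complex) gchoose i) (YW (Y a (int K + int i) b) (m + n - int i) w)) = 0"
    using tr lin_zero[OF linu[rule_format]] vs_scale0[OF VS] by simp
  moreover have "Sum_any (\<lambda>i::nat. sW ((-1) ^ i * ((of_int (int K) :: complex) gchoose i))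
                  (YW a (int K + m - int i) (YW b (n + int i) w)
                   - sW ((-1::complex) powi (int K)) (YW b (int K + n - int i) (YW a (m + int i) w))))
     = (\<Sum>i\<le>K. sW ((-1) ^ i * of_nat (K choose i))
                  (YW a (int K + m - int i) (YW b (n + int i) w)
                   - sW ((-1::complex) ^ K) (YW b (int K + n - int i) (YW a (m + int i) w))))"
  proof (subst Sum_any.expand_superset[of "{..K}"])
    show "finite {..K}" by simp
    show "{i. sW ((-1) ^ i * ((of_int (int K) :: complex) gchoose i))
                  (YW a (int K + m - int i) (YW b (n + int i) w)
                   - sW ((-1::complex) powi (int K)) (YW b (int K + n - int i) (YW a (m + int i) w))) \<noteq> 0} \<subseteq> {..K}"
    proof
      fix i assume "i \<in> {i. sW ((-1) ^ i * ((of_int (int K) :: complex) gchoose i))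
                  (YW a (int K + m - int i) (YW b (n + int i) w)
                   - sW ((-1::complex) powi (int K)) (YW b (int K + n - int i) (YW a (m + int i) w))) \<noteq> 0}"
      then have "((of_nat K :: complex) gchoose i) \<noteq> 0" using vs_0scale[OF VS] by auto
      then have "of_nat (K choose i) \<noteq> (0::complex)" by (simp add: binomial_gbinomial)
      then show "i \<in> {..K}" by (auto simp: binomial_eq_0_iff)
    qed
    show "(\<Sum>i\<le>K. sW ((-1) ^ i * ((of_int (int K) :: complex) gchoose i))
                  (YW a (int K + m - int i) (YW b (n + int i) w)
                   - sW ((-1::complex) powi (int K)) (YW b (int K + n - int i) (YW a (m + int i) w))))
     = (\<Sum>i\<le>K. sW ((-1) ^ i * of_nat (K choose i))
                  (YW a (int K + m - int i) (YW b (n + int i) w)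
                   - sW ((-1::complex) ^ K) (YW b (int K + n - int i) (YW a (m + int i) w))))"
      by (simp add: binomial_gbinomial)
  qed
  ultimately have Z: "(\<Sum>i\<le>K. sW ((-1) ^ i * of_nat (K choose i))
                  (YW a (int K + m - int i) (YW b (n + int i) w)
                   - sW ((-1::complex) ^ K) (YW b (int K + n - int i) (YW a (m + int i) w)))) = 0"
    using J by simp
  have Z2: "(\<Sum>i\<le>K. (-1) ^ i * of_nat (K choose i) * \<alpha> (YW a (int K + m - int i) (YW b (n + int i) w)))
     = (-1) ^ K * (\<Sum>i\<le>K. (-1) ^ i * of_nat (K choose i) * \<alpha> (YW b (int K + n - int i) (YW a (m + int i) w)))"
  proof -
    have "\<alpha> (\<Sum>i\<le>K. sW ((-1) ^ i * of_nat (K choose i))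
                  (YW a (int K + m - int i) (YW b (n + int i) w)
                   - sW ((-1::complex) ^ K) (YW b (int K + n - int i) (YW a (m + int i) w)))) = 0"
      using Z lin_zero[OF al] by simp
    then have "(\<Sum>i\<le>K. (-1) ^ i * of_nat (K choose i) * (\<alpha> (YW a (int K + m - int i) (YW b (n + int i) w))
        - (-1) ^ K * \<alpha> (YW b (int K + n - int i) (YW a (m + int i) w)))) = 0"
      by (simp add: lin_sum[OF al] lin_scale[OF al] lin_diff[OF al])
    then show ?thesis by (simp add: algebra_simps sum_subtractf sum_distrib_left)
  qed
  have L: "DK K (\<lambda>p q. \<alpha> (YW a p (YW b q w))) p q
      = (-1) ^ K * (\<Sum>i\<le>K. (-1) ^ i * of_nat (K choose i) * \<alpha> (YW a (int K + m - int i) (YW b (n + int i) w)))"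
  proof -
    have "DK K (\<lambda>p q. \<alpha> (YW a p (YW b q w))) p q
        = (\<Sum>i\<le>K. of_nat (K choose (K - i)) * (-1)^(K - i) * \<alpha> (YW a (p - int (K - (K - i))) (YW b (q - int (K - i)) w)))"
      unfolding DK_def by (subst sum_atMost_reflect) simp
    also have "\<dots> = (\<Sum>i\<le>K. (-1) ^ K * ((-1) ^ i * of_nat (K choose i) * \<alpha> (YW a (int K + m - int i) (YW b (n + int i) w))))"
    proof (rule sum.cong)
      fix i assume i: "i \<in> {..K}"
      then have "(-1::complex)^(K - i) = (-1)^K * (-1)^i"
        by (metis (no_types) atMost_iff le_add_diff_inverse2 mult.commute power_add power_minus1_even power_mult_distrib mult_1_right left_minus_one_mult_self)
      moreover have "K choose (K - i) = K choose i" using i by (simp add: binomial_symmetric[symmetric])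
      moreover have ki: "K - (K - i) = i" using i by simp
      moreover have "p - int i = int K + m - int i" "q - int (K - i) = n + int i"
        using i by (auto simp: m_def n_def of_nat_diff)
      ultimately show "of_nat (K choose (K - i)) * (-1)^(K - i) * \<alpha> (YW a (p - int (K - (K - i))) (YW b (q - int (K - i)) w))
          = (-1) ^ K * ((-1) ^ i * of_nat (K choose i) * \<alpha> (YW a (int K + m - int i) (YW b (n + int i) w)))"
        by (simp add: algebra_simps)
    qed simp
    finally show ?thesis by (simp add: sum_distrib_left)
  qed
  have R: "DK K (\<lambda>p q. \<alpha> (YW b q (YW a p w))) p q
      = (\<Sum>i\<le>K. (-1) ^ i * of_nat (K choose i) * \<alpha> (YW b (int K + n - int i) (YW a (m + int i) w)))"
    unfolding DK_def by (rule sum.cong) (auto simp: m_def n_def algebra_simps)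
  have "(-1::complex) ^ K * (-1) ^ K = 1" by (simp add: power_mult_distrib[symmetric])
  then show ?thesis unfolding L R Z2 by (simp add: mult.assoc[symmetric])
qed



lemma eig_indep:
  fixes sV :: "complex \<Rightarrow> 'v::ab_group_add \<Rightarrow> 'v"
  assumes VS: "vector_space sV" and L: "Vector_Spaces.linear sV sV L0"
  shows "finite S \<Longrightarrow> (\<forall>k\<in>S. L0 (h k) = sV (of_int k) (h k)) \<Longrightarrow> (\<Sum>k\<in>S. h k) = 0 \<Longrightarrow> \<forall>k\<in>S. h k = 0"
proof (induction S arbitrary: h rule: finite_induct)
  case empty then show ?case by simp
next
  case (insert k0 S)
  define h' where "h' k = sV (of_int k - of_int k0) (h k)" for k
  have e1: "L0 (\<Sum>k\<in>insert k0 S. h k) - sV (of_int k0) (\<Sum>k\<in>insert k0 S. h k) = (\<Sum>k\<in>S. h' k)"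
  proof -
    have a1: "L0 (\<Sum>k\<in>insert k0 S. h k) = (\<Sum>k\<in>insert k0 S. sV (of_int k) (h k))"
      unfolding lin_sum[OF L] by (rule sum.cong) (use insert.prems(1) in auto)
    have "L0 (\<Sum>k\<in>insert k0 S. h k) - sV (of_int k0) (\<Sum>k\<in>insert k0 S. h k)
        = (\<Sum>k\<in>insert k0 S. sV (of_int k) (h k) - sV (of_int k0) (h k))"
      unfolding a1 vs_scale_sum[OF VS] sum_subtractf ..
    also have "\<dots> = (\<Sum>k\<in>insert k0 S. h' k)"
      by (simp add: h'_def vs_scale_ldiff[OF VS])
    also have "\<dots> = (\<Sum>k\<in>S. h' k)"
      using insert.hyps by (simp add: h'_def vs_0scale[OF VS])
    finally show ?thesis .
  qed
  have "(\<Sum>k\<in>S. h' k) = 0"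
    using e1 insert.prems(2) lin_zero[OF L] vs_scale0[OF VS] by simp
  moreover have "\<forall>k\<in>S. L0 (h' k) = sV (of_int k) (h' k)"
    using insert.prems(1) by (simp add: h'_def lin_scale[OF L] vs_scale_scale[OF VS] mult.commute)
  ultimately have "\<forall>k\<in>S. h' k = 0" using insert.IH by blast
  then have hS: "\<forall>k\<in>S. h k = 0" using insert.hyps by (auto simp: h'_def vs_scale_eq0[OF VS])
  then have "h k0 = 0" using insert.prems(2) insert.hyps by simp
  then show ?case using hS by simp
qed

lemma decomp_unique:
  fixes sV :: "complex \<Rightarrow> 'v::ab_group_add \<Rightarrow> 'v"
  assumes VS: "vector_space sV" and L: "Vector_Spaces.linear sV sV L0"
    and ff: "finite {k. f k \<noteq> 0}" and fg: "finite {k. g k \<noteq> 0}"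
    and f: "\<forall>k. L0 (f k) = sV (of_int k) (f k)" and g: "\<forall>k. L0 (g k) = sV (of_int k) (g k)"
    and e: "Sum_any f = Sum_any g"
  shows "f = g"
proof -
  define S where "S = {k. f k \<noteq> 0} \<union> {k. g k \<noteq> 0}"
  have fS: "finite S" using ff fg by (simp add: S_def)
  have "Sum_any f = (\<Sum>k\<in>S. f k)" by (rule Sum_any.expand_superset) (use fS in \<open>auto simp: S_def\<close>)
  moreover have "Sum_any g = (\<Sum>k\<in>S. g k)" by (rule Sum_any.expand_superset) (use fS in \<open>auto simp: S_def\<close>)
  ultimately have "(\<Sum>k\<in>S. f k - g k) = 0" using e by (simp add: sum_subtractf)
  moreover have "\<forall>k\<in>S. L0 (f k - g k) = sV (of_int k) (f k - g k)"
    using f g by (simp add: lin_diff[OF L] vs_scale_diff[OF VS])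
  ultimately have "\<forall>k\<in>S. f k - g k = 0" using eig_indep[OF VS L fS, of "\<lambda>k. f k - g k"] by blast
  then have "f k = g k" for k
  proof (cases "k \<in> S")
    case True then show ?thesis using \<open>\<forall>k\<in>S. f k - g k = 0\<close> by simp
  next
    case False then show ?thesis by (simp add: S_def)
  qed
  then show ?thesis by blast
qed

lemma hproj_eq:
  fixes sV :: "complex \<Rightarrow> 'v::ab_group_add \<Rightarrow> 'v"
  assumes VS: "vector_space sV" and L: "Vector_Spaces.linear sV sV (Lop Y om 0)"
    and ff: "finite {k. f k \<noteq> 0}" and fk: "\<forall>k. f k \<in> Vgr sV Y om k" and v: "v = Sum_any f"
  shows "hproj sV Y om k v = f k"
  unfolding hproj_def
proof (rule the_equality)
  show "\<exists>f'. finite {k. f' k \<noteq> 0} \<and> (\<forall>k. f' k \<in> Vgr sV Y om k) \<and> v = Sum_any f' \<and> f k = f' k"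
    using ff fk v by blast
next
  fix c assume "\<exists>f'. finite {k. f' k \<noteq> 0} \<and> (\<forall>k. f' k \<in> Vgr sV Y om k) \<and> v = Sum_any f' \<and> c = f' k"
  then obtain g where g: "finite {k. g k \<noteq> 0}" "\<forall>k. g k \<in> Vgr sV Y om k" "v = Sum_any g" "c = g k" by blast
  have gV: "\<forall>k. Lop Y om 0 (g k) = sV (of_int k) (g k)" using g(2) by (simp add: Vgr_def)
  have fV: "\<forall>k. Lop Y om 0 (f k) = sV (of_int k) (f k)" using fk by (simp add: Vgr_def)
  have "Sum_any g = Sum_any f" using g(3) v by simp
  then have "g = f"
    by (rule decomp_unique[OF VS L g(1) ff gV fV])
  then show "c = f k" using g by simp
qed



lemma VOA_vs: "is_VOA sV Y vac om c \<Longrightarrow> vector_space sV"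
  unfolding is_VOA_def by (elim conjE, assumption)
lemma VOA_lin2: "is_VOA sV Y vac om c \<Longrightarrow> \<forall>u n. Vector_Spaces.linear sV sV (Y u n)"
  unfolding is_VOA_def by (elim conjE, assumption)
lemma VOA_trunc: "is_VOA sV Y vac om c \<Longrightarrow> \<forall>u v. \<exists>N. \<forall>n\<ge>N. Y u n v = 0"
  unfolding is_VOA_def by (elim conjE, assumption)
lemma VOA_vir: "is_VOA sV Y vac om c \<Longrightarrow> (\<forall>m n v. Lop Y om m (Lop Y om n v) - Lop Y om n (Lop Y om m v)
              = sV (of_int (m - n)) (Lop Y om (m + n) v)
                + (if m + n = 0 then sV ((of_int m ^ 3 - of_int m) / 12 * c) v else 0))"
  unfolding is_VOA_def by (elim conjE, assumption)
lemma VOA_dec: "is_VOA sV Y vac om c \<Longrightarrow> (\<forall>v. \<exists>f. finite {k. f k \<noteq> 0} \<and> (\<forall>k. f k \<in> Vgr sV Y om k) \<and> v = Sum_any f)"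
  unfolding is_VOA_def by (elim conjE, assumption)
lemma VOA_low: "is_VOA sV Y vac om c \<Longrightarrow> (\<exists>N. \<forall>n<N. Vgr sV Y om n = {0})"
  unfolding is_VOA_def by (elim conjE, assumption)
lemma WM_vs: "is_weak_module sV Y vac sW YW \<Longrightarrow> vector_space sW"
  unfolding is_weak_module_def by (elim conjE, assumption)
lemma WM_lin1: "is_weak_module sV Y vac sW YW \<Longrightarrow> \<forall>n w. Vector_Spaces.linear sV sW (\<lambda>u. YW u n w)"
  unfolding is_weak_module_def by (elim conjE, assumption)
lemma WM_lin2: "is_weak_module sV Y vac sW YW \<Longrightarrow> \<forall>u n. Vector_Spaces.linear sW sW (YW u n)"
  unfolding is_weak_module_def by (elim conjE, assumption)
lemma WM_trunc: "is_weak_module sV Y vac sW YW \<Longrightarrow> \<forall>u w. \<exists>N. \<forall>n\<ge>N. YW u n w = 0"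
  unfolding is_weak_module_def by (elim conjE, assumption)
lemma WM_jac: "is_weak_module sV Y vac sW YW \<Longrightarrow> jacobi_identity sW Y YW"
  unfolding is_weak_module_def by (elim conjE, assumption)



lemma L1_deg:
  fixes sV :: "complex \<Rightarrow> 'v::ab_group_add \<Rightarrow> 'v"
  assumes VOA: "is_VOA sV Y vac om c" and v: "v \<in> Vgr sV Y om k"
  shows "Lop Y om 1 v \<in> Vgr sV Y om (k - 1)"
proof -
  note VS = VOA_vs[OF VOA] and lin = VOA_lin2[OF VOA] and vir = VOA_vir[OF VOA]
  have L1: "Vector_Spaces.linear sV sV (Lop Y om 1)" using lin by (simp add: Lop_def)
  have "Lop Y om 0 (Lop Y om 1 v) - Lop Y om 1 (Lop Y om 0 v) = sV (-1) (Lop Y om 1 v)"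
    using vir[rule_format, of 0 1 v] by simp
  moreover have "Lop Y om 0 v = sV (of_int k) v" using v by (simp add: Vgr_def)
  ultimately have "Lop Y om 0 (Lop Y om 1 v) = sV (of_int k) (Lop Y om 1 v) + sV (-1) (Lop Y om 1 v)"
    by (simp add: lin_scale[OF L1] algebra_simps)
  also have "\<dots> = sV (of_int (k - 1)) (Lop Y om 1 v)"
    by (simp add: vs_scale_ladd[OF VS, symmetric])
  finally show ?thesis by (simp add: Vgr_def)
qed

lemma L1_pow_deg:
  fixes sV :: "complex \<Rightarrow> 'v::ab_group_add \<Rightarrow> 'v"
  assumes VOA: "is_VOA sV Y vac om c" and v: "v \<in> Vgr sV Y om k"
  shows "(Lop Y om 1 ^^ j) v \<in> Vgr sV Y om (k - int j)"
proof (induction j)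
  case 0 then show ?case using v by simp
next
  case (Suc j)
  then have "Lop Y om 1 ((Lop Y om 1 ^^ j) v) \<in> Vgr sV Y om (k - int j - 1)" by (rule L1_deg[OF VOA])
  then show ?case by (simp add: algebra_simps)
qed

lemma finite_max_bound:
  assumes "finite S" "\<forall>s\<in>S. \<exists>N::int. \<forall>n\<ge>N. P s n"
  shows "\<exists>N. \<forall>s\<in>S. \<forall>n\<ge>N. P s n"
  using assms
proof (induction S rule: finite_induct)
  case empty then show ?case by simp
next
  case (insert s S)
  then obtain N1 N2 where "\<forall>n\<ge>N1. P s n" "\<forall>s\<in>S. \<forall>n\<ge>N2. P s n" by auto
  then show ?case by (intro exI[of _ "max N1 N2"]) auto
qed



lemma yform:
  fixes sV :: "complex \<Rightarrow> 'v::ab_group_add \<Rightarrow> 'v" and sW :: "complex \<Rightarrow> 'w::ab_group_add \<Rightarrow> 'w"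
  assumes VOA: "is_VOA sV Y vac om c" and WM: "is_weak_module sV Y vac sW YW"
  shows "\<exists>S a b d. finite (S :: (int \<times> nat) set) \<and> (\<forall>p w. Yo sV Y om sW YW v p w = (\<Sum>s\<in>S. sW (a s) (YW (b s) (p + d s) w)))"
proof -
  note VS = VOA_vs[OF VOA] and lin = VOA_lin2[OF VOA] and dec = VOA_dec[OF VOA] and low = VOA_low[OF VOA]
  note VSW = WM_vs[OF WM] and linu = WM_lin1[OF WM]
  have L0: "Vector_Spaces.linear sV sV (Lop Y om 0)" using lin by (simp add: Lop_def)
  have L1: "Vector_Spaces.linear sV sV (Lop Y om 1)" using lin by (simp add: Lop_def)
  obtain f where ff: "finite {k. f k \<noteq> 0}" and fk: "\<forall>k. f k \<in> Vgr sV Y om k" and fv: "v = Sum_any f"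
    using dec by blast
  obtain N0 where N0: "\<forall>n<N0. Vgr sV Y om n = {0}" using low by blast
  have hp: "hproj sV Y om k v = f k" for k by (rule hproj_eq[OF VS L0 ff fk fv])
  define S where "S = {(k, j). f k \<noteq> 0 \<and> int j \<le> k - N0}"
  have fS: "finite S"
  proof -
    have "S \<subseteq> (\<Union>k\<in>{k. f k \<noteq> 0}. {k} \<times> {..nat (k - N0)})" by (auto simp: S_def)
    moreover have "finite (\<Union>k\<in>{k. f k \<noteq> 0}. {k} \<times> {..nat (k - N0)})" using ff by auto
    ultimately show ?thesis by (rule finite_subset)
  qed
  have L1pow0: "(Lop Y om 1 ^^ j) 0 = 0" for j
    by (induction j) (simp_all add: lin_zero[OF L1])
  have vec0: "(Lop Y om 1 ^^ j) (hproj sV Y om k v) = 0" if "(k, j) \<notin> S" for k j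
  proof (cases "f k = 0")
    case True then show ?thesis by (simp add: hp L1pow0)
  next
    case False
    then have "int j > k - N0" using that by (auto simp: S_def)
    moreover have "(Lop Y om 1 ^^ j) (f k) \<in> Vgr sV Y om (k - int j)" by (rule L1_pow_deg[OF VOA fk[rule_format]])
    ultimately show ?thesis using N0 hp by auto
  qed
  define a where "a s = (case s of (k, j) \<Rightarrow> (-1::complex) powi k / of_nat (fact j))" for s :: "int \<times> nat"
  define b where "b s = (case s of (k, j) \<Rightarrow> (Lop Y om 1 ^^ j) (hproj sV Y om k v))" for s :: "int \<times> nat"
  define d where "d s = (case s of (k, j) \<Rightarrow> - int j + 2 * k - 1)" for s :: "int \<times> nat"
  have "Yo sV Y om sW YW v p w = (\<Sum>s\<in>S. sW (a s) (YW (b s) (p + d s) w))" for p w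
    unfolding Yo_def
  proof (subst Sum_any.expand_superset[OF fS])
    show "{s. (case s of (k, j) \<Rightarrow> sW ((-1::complex) powi k / of_nat (fact j))
        (YW ((Lop Y om 1 ^^ j) (hproj sV Y om k v)) (p - int j + 2 * k - 1) w)) \<noteq> 0} \<subseteq> S"
    proof
      fix s assume s: "s \<in> {s. (case s of (k, j) \<Rightarrow> sW ((-1::complex) powi k / of_nat (fact j))
        (YW ((Lop Y om 1 ^^ j) (hproj sV Y om k v)) (p - int j + 2 * k - 1) w)) \<noteq> 0}"
      obtain k j where kj: "s = (k, j)" by (cases s)
      show "s \<in> S"
      proof (rule ccontr)
        assume "s \<notin> S"
        then have "(Lop Y om 1 ^^ j) (hproj sV Y om k v) = 0" using vec0 kj by blast
        then show False using s kj lin_zero[OF linu[rule_format]] vs_scale0[OF VSW] by simp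
      qed
    qed
    show "(\<Sum>s\<in>S. case s of (k, j) \<Rightarrow> sW ((-1::complex) powi k / of_nat (fact j))
        (YW ((Lop Y om 1 ^^ j) (hproj sV Y om k v)) (p - int j + 2 * k - 1) w))
      = (\<Sum>s\<in>S. sW (a s) (YW (b s) (p + d s) w))"
      by (rule sum.cong) (auto simp: a_def b_def d_def algebra_simps)
  qed
  then show ?thesis using fS by blast
qed



lemma Yo_trunc:
  fixes sV :: "complex \<Rightarrow> 'v::ab_group_add \<Rightarrow> 'v" and sW :: "complex \<Rightarrow> 'w::ab_group_add \<Rightarrow> 'w"
  assumes VOA: "is_VOA sV Y vac om c" and WM: "is_weak_module sV Y vac sW YW"
  shows "\<exists>P0. \<forall>p>P0. Yo sV Y om sW YW v p w = 0"
proof -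
  obtain S a b d where fS: "finite (S :: (int \<times> nat) set)"
    and Yf: "\<forall>p w. Yo sV Y om sW YW v p w = (\<Sum>s\<in>S. sW (a s) (YW (b s) (p + d s) w))"
    using yform[OF VOA WM] by blast
  have "\<forall>s\<in>S. \<exists>N::int. \<forall>n\<ge>N. YW (b s) (n + d s) w = 0"
  proof
    fix s assume "s \<in> S"
    obtain N where "\<forall>n\<ge>N. YW (b s) n w = 0" using WM_trunc[OF WM] by blast
    then show "\<exists>N::int. \<forall>n\<ge>N. YW (b s) (n + d s) w = 0" by (intro exI[of _ "N - d s"]) auto
  qed
  then obtain N where N: "\<forall>s\<in>S. \<forall>n\<ge>N. YW (b s) (n + d s) w = 0"
    using finite_max_bound[OF fS, of "\<lambda>s n. YW (b s) (n + d s) w = 0"] by blast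
  have "\<forall>p>N. Yo sV Y om sW YW v p w = 0"
  proof (intro allI impI)
    fix p assume p: "p > N"
    have "Yo sV Y om sW YW v p w = (\<Sum>s\<in>S. sW (a s) (YW (b s) (p + d s) w))" using Yf by blast
    also have "\<dots> = (\<Sum>s\<in>S. 0)"
    proof (rule sum.cong)
      fix s assume "s \<in> S"
      then have "YW (b s) (p + d s) w = 0" using N p by auto
      then show "sW (a s) (YW (b s) (p + d s) w) = 0" using vs_scale0[OF WM_vs[OF WM]] by simp
    qed simp
    finally show "Yo sV Y om sW YW v p w = 0" by simp
  qed
  then show ?thesis by blast
qed

lemma Yo_zero:
  fixes sV :: "complex \<Rightarrow> 'v::ab_group_add \<Rightarrow> 'v" and sW :: "complex \<Rightarrow> 'w::ab_group_add \<Rightarrow> 'w"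
  assumes VOA: "is_VOA sV Y vac om c" and WM: "is_weak_module sV Y vac sW YW"
  shows "Yo sV Y om sW YW v p 0 = 0"
proof -
  obtain S a b d where Yf: "\<forall>p w. Yo sV Y om sW YW v p w = (\<Sum>s\<in>(S :: (int \<times> nat) set). sW (a s) (YW (b s) (p + d s) w))"
    using yform[OF VOA WM, of v] by blast
  have "Yo sV Y om sW YW v p 0 = (\<Sum>s\<in>S. sW (a s) (YW (b s) (p + d s) 0))" using Yf by blast
  also have "\<dots> = (\<Sum>s\<in>S. 0)"
  proof (rule sum.cong)
    fix s assume "s \<in> S"
    have "YW (b s) (p + d s) 0 = 0" by (rule lin_zero[OF WM_lin2[OF WM, rule_format]])
    then show "sW (a s) (YW (b s) (p + d s) 0) = 0" using vs_scale0[OF WM_vs[OF WM]] by simp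
  qed simp
  finally show ?thesis by simp
qed

lemma DK_lin_shift:
  "finite I \<Longrightarrow> DK K (\<lambda>p q. \<Sum>i\<in>I. c i * H i (p + e i) (q + f i)) p q = (\<Sum>i\<in>I. c i * DK K (H i) (p + e i) (q + f i))"
  unfolding DK_def sum_distrib_left
  apply (subst sum.swap)
  apply (rule sum.cong, simp)
  apply (rule sum.cong, simp)
  apply (simp add: algebra_simps)
  done



lemma loc_AB:
  fixes sV :: "complex \<Rightarrow> 'v::ab_group_add \<Rightarrow> 'v" and sW :: "complex \<Rightarrow> 'w::ab_group_add \<Rightarrow> 'w"
  assumes VOA: "is_VOA sV Y vac om c" and WM: "is_weak_module sV Y vac sW YW"
    and al: "Vector_Spaces.linear sW (*) \<alpha>"
  shows "\<exists>K. (D12 ^^ K) (\<lambda>p q. \<alpha> (Yo sV Y om sW YW v q (Yo sV Y om sW YW u p w)))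
           = (D12 ^^ K) (\<lambda>p q. \<alpha> (Yo sV Y om sW YW u p (Yo sV Y om sW YW v q w)))"
proof -
  obtain Su au bu du where fSu: "finite (Su :: (int \<times> nat) set)"
    and Yu: "\<forall>p w. Yo sV Y om sW YW u p w = (\<Sum>s\<in>Su. sW (au s) (YW (bu s) (p + du s) w))"
    using yform[OF VOA WM, of u] by blast
  obtain Sv av bv dv where fSv: "finite (Sv :: (int \<times> nat) set)"
    and Yv: "\<forall>p w. Yo sV Y om sW YW v p w = (\<Sum>s\<in>Sv. sW (av s) (YW (bv s) (p + dv s) w))"
    using yform[OF VOA WM, of v] by blast
  note VSW = WM_vs[OF WM] and lin2 = WM_lin2[OF WM, rule_format]
  have trunc: "\<forall>x\<in>Su \<times> Sv. \<exists>N::int. \<forall>n\<ge>N. Y (bu (fst x)) n (bv (snd x)) = 0"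
    using VOA_trunc[OF VOA] by blast
  obtain N where N: "\<forall>x\<in>Su \<times> Sv. \<forall>n\<ge>N. Y (bu (fst x)) n (bv (snd x)) = 0"
    using finite_max_bound[OF finite_cartesian_product[OF fSu fSv], of "\<lambda>x n. Y (bu (fst x)) n (bv (snd x)) = 0"] trunc
    by blast
  define K where "K = nat N"
  have trK: "\<forall>i::nat. Y (bu s) (int K + int i) (bv t) = 0" if "s \<in> Su" "t \<in> Sv" for s t
  proof
    fix i :: nat
    have "int K + int i \<ge> N" by (simp add: K_def)
    then show "Y (bu s) (int K + int i) (bv t) = 0" using N that by force
  qed
  define F where "F s t p q = \<alpha> (YW (bu s) p (YW (bv t) q w))" for s t p q
  define G where "G s t p q = \<alpha> (YW (bv t) q (YW (bu s) p w))" for s t p q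
  have eA: "\<alpha> (Yo sV Y om sW YW v q (Yo sV Y om sW YW u p w))
     = (\<Sum>x\<in>Sv \<times> Su. (av (fst x) * au (snd x)) * G (snd x) (fst x) (p + du (snd x)) (q + dv (fst x)))" for p q
  proof -
    have "Yo sV Y om sW YW v q (Yo sV Y om sW YW u p w)
       = (\<Sum>t\<in>Sv. sW (av t) (YW (bv t) (q + dv t) (\<Sum>s\<in>Su. sW (au s) (YW (bu s) (p + du s) w))))"
      using Yu Yv by simp
    also have "\<dots> = (\<Sum>t\<in>Sv. sW (av t) (\<Sum>s\<in>Su. sW (au s) (YW (bv t) (q + dv t) (YW (bu s) (p + du s) w))))"
      by (simp add: lin_sum[OF lin2] lin_scale[OF lin2])
    finally have "\<alpha> (Yo sV Y om sW YW v q (Yo sV Y om sW YW u p w))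
       = (\<Sum>t\<in>Sv. av t * (\<Sum>s\<in>Su. au s * G s t (p + du s) (q + dv t)))"
      by (simp add: lin_sum[OF al] lin_scale[OF al] G_def)
    also have "\<dots> = (\<Sum>t\<in>Sv. \<Sum>s\<in>Su. (av t * au s) * G s t (p + du s) (q + dv t))"
      by (simp add: sum_distrib_left mult.assoc)
    also have "\<dots> = (\<Sum>x\<in>Sv \<times> Su. (av (fst x) * au (snd x)) * G (snd x) (fst x) (p + du (snd x)) (q + dv (fst x)))"
      unfolding sum.cartesian_product by (rule sum.cong) auto
    finally show ?thesis .
  qed
  have eB: "\<alpha> (Yo sV Y om sW YW u p (Yo sV Y om sW YW v q w))
     = (\<Sum>x\<in>Sv \<times> Su. (av (fst x) * au (snd x)) * F (snd x) (fst x) (p + du (snd x)) (q + dv (fst x)))" for p q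
  proof -
    have "Yo sV Y om sW YW u p (Yo sV Y om sW YW v q w)
       = (\<Sum>s\<in>Su. sW (au s) (YW (bu s) (p + du s) (\<Sum>t\<in>Sv. sW (av t) (YW (bv t) (q + dv t) w))))"
      using Yu Yv by simp
    also have "\<dots> = (\<Sum>s\<in>Su. sW (au s) (\<Sum>t\<in>Sv. sW (av t) (YW (bu s) (p + du s) (YW (bv t) (q + dv t) w))))"
      by (simp add: lin_sum[OF lin2] lin_scale[OF lin2])
    finally have "\<alpha> (Yo sV Y om sW YW u p (Yo sV Y om sW YW v q w))
       = (\<Sum>s\<in>Su. au s * (\<Sum>t\<in>Sv. av t * F s t (p + du s) (q + dv t)))"
      by (simp add: lin_sum[OF al] lin_scale[OF al] F_def)
    also have "\<dots> = (\<Sum>s\<in>Su. \<Sum>t\<in>Sv. (av t * au s) * F s t (p + du s) (q + dv t))"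
      by (simp add: sum_distrib_left algebra_simps)
    also have "\<dots> = (\<Sum>t\<in>Sv. \<Sum>s\<in>Su. (av t * au s) * F s t (p + du s) (q + dv t))"
      by (rule sum.swap)
    also have "\<dots> = (\<Sum>x\<in>Sv \<times> Su. (av (fst x) * au (snd x)) * F (snd x) (fst x) (p + du (snd x)) (q + dv (fst x)))"
      unfolding sum.cartesian_product by (rule sum.cong) auto
    finally show ?thesis .
  qed
  have FG: "DK K (F s t) P Q = DK K (G s t) P Q" if "s \<in> Su" "t \<in> Sv" for s t P Q
    unfolding F_def G_def
    by (rule loc_pair[OF VSW WM_lin1[OF WM] WM_jac[OF WM] al trK[OF that]])
  have fI: "finite (Sv \<times> Su)" using fSu fSv by simp
  have "DK K (\<lambda>p q. \<alpha> (Yo sV Y om sW YW v q (Yo sV Y om sW YW u p w))) p q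
      = DK K (\<lambda>p q. \<alpha> (Yo sV Y om sW YW u p (Yo sV Y om sW YW v q w))) p q" for p q
  proof -
    have "DK K (\<lambda>p q. \<alpha> (Yo sV Y om sW YW v q (Yo sV Y om sW YW u p w))) p q
        = (\<Sum>x\<in>Sv \<times> Su. (av (fst x) * au (snd x)) * DK K (G (snd x) (fst x)) (p + du (snd x)) (q + dv (fst x)))"
      unfolding eA by (rule DK_lin_shift[OF fI])
    also have "\<dots> = (\<Sum>x\<in>Sv \<times> Su. (av (fst x) * au (snd x)) * DK K (F (snd x) (fst x)) (p + du (snd x)) (q + dv (fst x)))"
      by (rule sum.cong) (auto simp: FG)
    also have "\<dots> = DK K (\<lambda>p q. \<alpha> (Yo sV Y om sW YW u p (Yo sV Y om sW YW v q w))) p q"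
      unfolding eB by (rule DK_lin_shift[OF fI, symmetric])
    finally show ?thesis .
  qed
  then show ?thesis unfolding D12_pow by blast
qed



theorem proposition3p24:
  fixes sV :: "complex \<Rightarrow> 'v::ab_group_add \<Rightarrow> 'v"
    and Y :: "'v \<Rightarrow> int \<Rightarrow> 'v \<Rightarrow> 'v"
    and vac om :: 'v and c :: complex
    and sW :: "complex \<Rightarrow> 'w::ab_group_add \<Rightarrow> 'w"
    and YW :: "'v \<Rightarrow> int \<Rightarrow> 'w \<Rightarrow> 'w"
    and z :: complex and \<alpha> :: "'w \<Rightarrow> complex"
    and u v :: 'v and m n :: int
  assumes "is_VOA sV Y vac om c"
    and "is_weak_module sV Y vac sW YW"
    and "z \<noteq> 0"
    and "\<alpha> \<in> DPz sV Y om sW YW z"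
  shows "YL sV Y om sW YW z u m (YR sV Y om sW YW z v n \<alpha>)
       = YR sV Y om sW YW z v n (YL sV Y om sW YW z u m \<alpha>)"
proof -
  note VOA = assms(1) and WM = assms(2) and z = assms(3)
  have al: "Vector_Spaces.linear sW (*) \<alpha>" using assms(4) unfolding DPz_def by blast
  have dp: "\<forall>v. \<exists>M N :: nat. \<forall>w. \<exists>P :: complex poly. \<forall>x. norm z < norm x \<longrightarrow>
        ((\<lambda>p. \<alpha> (Yo sV Y om sW YW v p w) * x powi p) has_sum (poly P x / (x ^ M * (x - z) ^ N))) UNIV"
    using assms(4) unfolding DPz_def by blast
  have rowfc: "\<exists>M N. \<forall>w. fc z M N (\<lambda>q. \<alpha> (Yo sV Y om sW YW v' q w))" for v'
  proof -
    obtain M N where h: "\<forall>w. \<exists>P :: complex poly. \<forall>x. norm z < norm x \<longrightarrow>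
        ((\<lambda>p. \<alpha> (Yo sV Y om sW YW v' p w) * x powi p) has_sum (poly P x / (x ^ M * (x - z) ^ N))) UNIV"
      using dp by blast
    have "fc z M N (\<lambda>q. \<alpha> (Yo sV Y om sW YW v' q w))" for w
    proof -
      obtain P where hP: "\<forall>x. norm z < norm x \<longrightarrow>
        ((\<lambda>p. \<alpha> (Yo sV Y om sW YW v' p w) * x powi p) has_sum (poly P x / (x ^ M * (x - z) ^ N))) UNIV"
        using h by blast
      obtain Q0 where Q0: "\<forall>q>Q0. Yo sV Y om sW YW v' q w = 0" using Yo_trunc[OF VOA WM] by blast
      have ut: "utr (\<lambda>q. \<alpha> (Yo sV Y om sW YW v' q w))"
        unfolding utr_def using Q0 lin_zero[OF al] by (intro exI[of _ Q0]) simp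
      have "Op z M N (\<lambda>q. \<alpha> (Yo sV Y om sW YW v' q w)) = pcoef P" by (rule cls_coef[OF z ut hP])
      then show ?thesis using ut by (simp add: fc_def pcoef_def)
    qed
    then show ?thesis by blast
  qed
  obtain Mv Nv where hv: "\<forall>w. fc z Mv Nv (\<lambda>q. \<alpha> (Yo sV Y om sW YW v q w))" using rowfc by blast
  obtain Mu Nu where hu: "\<forall>w. fc z Mu Nu (\<lambda>q. \<alpha> (Yo sV Y om sW YW u q w))" using rowfc by blast
  show ?thesis
  proof (rule ext)
    fix w
    define A where "A = (\<lambda>p q. \<alpha> (Yo sV Y om sW YW v q (Yo sV Y om sW YW u p w)))"
    define B where "B = (\<lambda>p q. \<alpha> (Yo sV Y om sW YW u p (Yo sV Y om sW YW v q w)))"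
    have Ar: "\<forall>p. fc z Mv Nv (A p)" using hv by (simp add: A_def)
    obtain P0 where P0: "\<forall>p>P0. Yo sV Y om sW YW u p w = 0" using Yo_trunc[OF VOA WM] by blast
    have Az: "\<forall>p>P0. \<forall>q. A p q = 0"
      using P0 Yo_zero[OF VOA WM] lin_zero[OF al] by (simp add: A_def)
    have Bc: "\<forall>q. fc z Mu Nu (\<lambda>p. B p q)" using hu by (simp add: B_def)
    obtain Q0 where Q0: "\<forall>q>Q0. Yo sV Y om sW YW v q w = 0" using Yo_trunc[OF VOA WM] by blast
    have Bz: "\<forall>q>Q0. \<forall>p. B p q = 0"
      using Q0 Yo_zero[OF VOA WM] lin_zero[OF al] by (simp add: B_def)
    obtain K where loc: "(D12 ^^ K) A = (D12 ^^ K) B"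
      using loc_AB[OF VOA WM al, of v u w] unfolding A_def B_def by blast
    have "expL z (\<lambda>p. expR z (A p) n) m = expR z (\<lambda>q. expL z (\<lambda>p. B p q) m) n"
      by (rule abstract_comm[OF z Ar Az Bc Bz loc])
    then show "YL sV Y om sW YW z u m (YR sV Y om sW YW z v n \<alpha>) w
       = YR sV Y om sW YW z v n (YL sV Y om sW YW z u m \<alpha>) w"
      by (simp add: YL_def YR_def A_def B_def)
  qed
qed

end
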